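(* Let $(P,\le,A_1\ldots A_k)$ be a regular poset of width $w$, let $N$ be an active node with characteristics $(u,s)$, and let $M$ be a problematic node that is a child of a node of $Q(N)$, with characteristics $(u',s')$. Let $(u'',s'')$ be any characteristics. Then the set $\mathcal{F}$ of all first problematic nodes in $D(M)$ with characteristics $(u'',s'')$ contains at most $(u')^2\le w^2$ nodes.
   Context: Let $(P,\le)$ be a finite poset of width $w$. For $A\subseteq P$ let $A{\uparrow}=\{y: x\le y\text{ for some }x\in A\}$, $A{\downarrow}=\{y: y\le x\text{ for some }x\in A\}$. For maximal antichains $A,B$ write $A\sqsubseteq B$ if $A\subseteq B{\downarrow}$, and $A\sqsubset B$ if also $A\ne B$. For disjoint antichains $A\sqsubset B$, $(A,B,<)$ is the bipartite graph with classes $A,B$ and edges $(a<b)$ for $a\in A,b\in B$, $a<b$; it is regular if every edge lies in a perfect matching. A regular poset $(P,\le,A_1\ldots A_k)$: $A_1,\dots,A_k$ are maximum antichains partitioning $P$, $(\{A_1,\dots,A_k\},\sqsubseteq)$ is a linear order with minimum $A_1$ and maximum $A_2$, $a<b$ for all $a\in A_1,b\in A_2$, and for every $t\in[2,k]$ and every $A_p\sqsubset A_s$ consecutive in $(\{A_1,\dots,A_t\},\sqsubseteq)$ the graph $(A_p,A_s,<)$ is regular. A node is a bipartite graph $N=(X,Y,<)$ where, for some such consecutive pair $A_p\sqsubset A_s$ (at some stage $t$), $X\subseteq A_p$, $Y\subseteq A_s$ and $X\cup Y$ is the vertex set of a connected component of $(A_p,A_s,<)$. Its width is $|X|=|Y|$,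 $\mathrm{Int}(N)=X{\uparrow}\cap Y{\downarrow}$, and its surplus is the largest $k$ such that $|A{\uparrow}\cap Y|\ge\min\{|A|+k,|Y|\}$ for all non-empty $A\subseteq X$ ($\infty$ if $N$ is complete bipartite); its characteristics is the pair (width, surplus). Node tree: the set of all nodes, where when for $t\ge3$ the antichain $A_t$ is inserted between $A_p\sqsubset A_s$ consecutive at stage $t-1$, each node $M$ of $(A_p,A_t,<)$ or $(A_t,A_s,<)$ is a child of the unique node $N$ of $(A_p,A_s,<)$ with $\mathrm{Int}(M)\subset\mathrm{Int}(N)$; it is a rooted tree with root $(A_1,A_2,<)$. A Dilworth clique of width $m$ in a node $(X,Y,<)$ is a set $\{x_1,\dots,x_m,y_1,\dots,y_m\}$ with $x_i\in X$, $y_i\in Y$, $x_i<y_j$ for all $i,j\in[m]$, such that the edges $x_1<y_1,\dots,x_m<y_m$ extend to a perfect matching of $(X,Y,<)$. A node is active if it contains a Dilworth clique of width $\lceil\sqrt{w}\rceil$ and no proper ancestor of it has the same characteristics. For an active node $N$ with characteristics $(u,s)$, $D(N)$ is the set of all non-active nodes $K$ such that $N$ is the first active node on the path from $K$ to the root, and $Q(N)$ consists of $N$ together with all nodes of $D(N)$ with characteristics $(u,s)$. A node is problematic if its width is at least $\lfloor\sqrt{w}\rfloor+1$ and it contains no Dilworth clique of width $\lceil\sqrt{w}\rceil$. For the node $M$, $D(M)$ denotes the set consisting of $M$ and all its descendants in the node tree. A node $K\in D(M)$ is a first problematic node in $D(M)$ if $K$ is problematic and it is the first problematic node with characteristics equal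 to those of $K$ on the path from $M$ to $K$ (in particular $M$ itself is a first problematic node in $D(M)$). *)

theory Defs
  imports Complex_Main "HOL-Library.Extended_Nat"
begin

(* The poset is a finite carrier set P inside a type with a partial order;
   the order of the poset is the restriction of <= to P. *)

definition antichain :: "'a::order set \<Rightarrow> 'a set \<Rightarrow> bool" where
  "antichain P C \<longleftrightarrow> C \<subseteq> P \<and> (\<forall>x\<in>C. \<forall>y\<in>C. x \<le> y \<longrightarrow> x = y)"

definition width :: "'a::order set \<Rightarrow> nat" where
  "width P = Max (card ` {C. antichain P C})"

definition maximum_antichain :: "'a::order set \<Rightarrow> 'a set \<Rightarrow> bool" where
  "maximum_antichain P C \<longleftrightarrow> antichain P C \<and> card C = width P"

definition up :: "'a::order set \<Rightarrow> 'a set \<Rightarrow> 'a set" where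
  "up P B = {y\<in>P. \<exists>x\<in>B. x \<le> y}"

definition down :: "'a::order set \<Rightarrow> 'a set \<Rightarrow> 'a set" where
  "down P B = {y\<in>P. \<exists>x\<in>B. y \<le> x}"

definition sqle :: "'a::order set \<Rightarrow> 'a set \<Rightarrow> 'a set \<Rightarrow> bool" where
  "sqle P B C \<longleftrightarrow> B \<subseteq> down P C"

definition sqlt :: "'a::order set \<Rightarrow> 'a set \<Rightarrow> 'a set \<Rightarrow> bool" where
  "sqlt P B C \<longleftrightarrow> sqle P B C \<and> B \<noteq> C"

definition perfect_matching :: "'a::order set \<Rightarrow> 'a set \<Rightarrow> ('a \<Rightarrow> 'a) \<Rightarrow> bool" where
  "perfect_matching X Y f \<longleftrightarrow> bij_betw f X Y \<and> (\<forall>x\<in>X. x < f x)"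

definition regular_bip :: "'a::order set \<Rightarrow> 'a set \<Rightarrow> bool" where
  "regular_bip X Y \<longleftrightarrow>
     (\<forall>a\<in>X. \<forall>b\<in>Y. a < b \<longrightarrow> (\<exists>f. perfect_matching X Y f \<and> f a = b))"

definition consec :: "'a::order set \<Rightarrow> (nat \<Rightarrow> 'a set) \<Rightarrow> nat \<Rightarrow> nat \<Rightarrow> nat \<Rightarrow> bool" where
  "consec P A t p s \<longleftrightarrow> p \<in> {1..t} \<and> s \<in> {1..t} \<and> sqlt P (A p) (A s) \<and>
     \<not> (\<exists>q\<in>{1..t}. sqlt P (A p) (A q) \<and> sqlt P (A q) (A s))"

definition regular_poset :: "'a::order set \<Rightarrow> (nat \<Rightarrow> 'a set) \<Rightarrow> nat \<Rightarrow> bool" where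
  "regular_poset P A k \<longleftrightarrow>
     finite P \<and> 2 \<le> k \<and>
     (\<forall>i\<in>{1..k}. maximum_antichain P (A i) \<and> A i \<noteq> {}) \<and>
     (\<forall>i\<in>{1..k}. \<forall>j\<in>{1..k}. i \<noteq> j \<longrightarrow> A i \<inter> A j = {}) \<and>
     (\<Union>i\<in>{1..k}. A i) = P \<and>
     (\<forall>i\<in>{1..k}. \<forall>j\<in>{1..k}. sqle P (A i) (A j) \<or> sqle P (A j) (A i)) \<and>
     (\<forall>i\<in>{1..k}. \<forall>j\<in>{1..k}. sqle P (A i) (A j) \<and> sqle P (A j) (A i) \<longrightarrow> A i = A j) \<and>
     (\<forall>i\<in>{1..k}. \<forall>j\<in>{1..k}. \<forall>l\<in>{1..k}.
        sqle P (A i) (A j) \<and> sqle P (A j) (A l) \<longrightarrow> sqle P (A i) (A l)) \<and>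
     (\<forall>i\<in>{1..k}. sqle P (A 1) (A i) \<and> sqle P (A i) (A 2)) \<and>
     (\<forall>a\<in>A 1. \<forall>b\<in>A 2. a < b) \<and>
     (\<forall>t\<in>{2..k}. \<forall>p s. consec P A t p s \<longrightarrow> regular_bip (A p) (A s))"

definition bip_adj :: "'a::order set \<Rightarrow> 'a set \<Rightarrow> 'a \<Rightarrow> 'a \<Rightarrow> bool" where
  "bip_adj X Y u v \<longleftrightarrow> (u \<in> X \<and> v \<in> Y \<and> u < v) \<or> (u \<in> Y \<and> v \<in> X \<and> v < u)"

definition component :: "'a::order set \<Rightarrow> 'a set \<Rightarrow> 'a set \<Rightarrow> bool" where
  "component X Y C \<longleftrightarrow> (\<exists>u\<in>X \<union> Y. C = {v. (bip_adj X Y)\<^sup>*\<^sup>* u v})"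

(* a node is represented by the pair (X,Y) *)
definition comp_node :: "'a::order set \<Rightarrow> 'a set \<Rightarrow> 'a set \<times> 'a set \<Rightarrow> bool" where
  "comp_node X Y N \<longleftrightarrow> (\<exists>C. component X Y C \<and> fst N = C \<inter> X \<and> snd N = C \<inter> Y)"

definition is_node :: "'a::order set \<Rightarrow> (nat \<Rightarrow> 'a set) \<Rightarrow> nat \<Rightarrow> 'a set \<times> 'a set \<Rightarrow> bool" where
  "is_node P A k N \<longleftrightarrow> (\<exists>t\<in>{2..k}. \<exists>p s. consec P A t p s \<and> comp_node (A p) (A s) N)"

definition Int_node :: "'a::order set \<Rightarrow> 'a set \<times> 'a set \<Rightarrow> 'a set" where
  "Int_node P N = up P (fst N) \<inter> down P (snd N)"

definition childof :: "'a::order set \<Rightarrow> (nat \<Rightarrow> 'a set) \<Rightarrow> nat \<Rightarrow> 'a set \<times> 'a set \<Rightarrow> 'a set \<times> 'a set \<Rightarrow> bool" where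
  "childof P A k M N \<longleftrightarrow>
     (\<exists>t\<in>{3..k}. \<exists>p s. consec P A (t - 1) p s \<and> sqlt P (A p) (A t) \<and> sqlt P (A t) (A s) \<and>
        comp_node (A p) (A s) N \<and> (comp_node (A p) (A t) M \<or> comp_node (A t) (A s) M) \<and>
        Int_node P M \<subset> Int_node P N)"

definition proper_anc :: "'a::order set \<Rightarrow> (nat \<Rightarrow> 'a set) \<Rightarrow> nat \<Rightarrow> 'a set \<times> 'a set \<Rightarrow> 'a set \<times> 'a set \<Rightarrow> bool" where
  "proper_anc P A k N K \<longleftrightarrow> (childof P A k)\<^sup>+\<^sup>+ K N"

definition node_width :: "'a set \<times> 'a set \<Rightarrow> nat" where
  "node_width N = card (fst N)"

definition complete_bip :: "'a::order set \<times> 'a set \<Rightarrow> bool" where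
  "complete_bip N \<longleftrightarrow> (\<forall>x\<in>fst N. \<forall>y\<in>snd N. x < y)"

definition surplus_cond :: "'a::order set \<Rightarrow> 'a set \<times> 'a set \<Rightarrow> nat \<Rightarrow> bool" where
  "surplus_cond P N j \<longleftrightarrow>
     (\<forall>B. B \<noteq> {} \<and> B \<subseteq> fst N \<longrightarrow> card (up P B \<inter> snd N) \<ge> min (card B + j) (card (snd N)))"

definition surplus :: "'a::order set \<Rightarrow> 'a set \<times> 'a set \<Rightarrow> enat" where
  "surplus P N = (if complete_bip N then \<infinity> else enat (GREATEST j. surplus_cond P N j))"

definition charac :: "'a::order set \<Rightarrow> 'a set \<times> 'a set \<Rightarrow> nat \<times> enat" where
  "charac P N = (node_width N, surplus P N)"

definition has_dilworth_clique :: "'a::order set \<times> 'a set \<Rightarrow> nat \<Rightarrow> bool" where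
  "has_dilworth_clique N m \<longleftrightarrow>
     (\<exists>xs ys :: nat \<Rightarrow> 'a. inj_on xs {..<m} \<and> inj_on ys {..<m} \<and>
        (\<forall>i<m. xs i \<in> fst N \<and> ys i \<in> snd N) \<and>
        (\<forall>i<m. \<forall>j<m. xs i < ys j) \<and>
        (\<exists>f. perfect_matching (fst N) (snd N) f \<and> (\<forall>i<m. f (xs i) = ys i)))"

definition active :: "'a::order set \<Rightarrow> (nat \<Rightarrow> 'a set) \<Rightarrow> nat \<Rightarrow> 'a set \<times> 'a set \<Rightarrow> bool" where
  "active P A k N \<longleftrightarrow> is_node P A k N \<and>
     has_dilworth_clique N (nat \<lceil>sqrt (real (width P))\<rceil>) \<and>
     \<not> (\<exists>N'. proper_anc P A k N' N \<and> charac P N' = charac P N)"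

definition Dact :: "'a::order set \<Rightarrow> (nat \<Rightarrow> 'a set) \<Rightarrow> nat \<Rightarrow> 'a set \<times> 'a set \<Rightarrow> ('a set \<times> 'a set) set" where
  "Dact P A k N = {K. is_node P A k K \<and> \<not> active P A k K \<and> proper_anc P A k N K \<and>
      \<not> (\<exists>N'. active P A k N' \<and> proper_anc P A k N' K \<and> proper_anc P A k N N')}"

definition Qset :: "'a::order set \<Rightarrow> (nat \<Rightarrow> 'a set) \<Rightarrow> nat \<Rightarrow> 'a set \<times> 'a set \<Rightarrow> ('a set \<times> 'a set) set" where
  "Qset P A k N = insert N {K \<in> Dact P A k N. charac P K = charac P N}"

definition problematic :: "'a::order set \<Rightarrow> (nat \<Rightarrow> 'a set) \<Rightarrow> nat \<Rightarrow> 'a set \<times> 'a set \<Rightarrow> bool" where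
  "problematic P A k M \<longleftrightarrow> is_node P A k M \<and>
     node_width M \<ge> nat \<lfloor>sqrt (real (width P))\<rfloor> + 1 \<and>
     \<not> has_dilworth_clique M (nat \<lceil>sqrt (real (width P))\<rceil>)"

definition desc :: "'a::order set \<Rightarrow> (nat \<Rightarrow> 'a set) \<Rightarrow> nat \<Rightarrow> 'a set \<times> 'a set \<Rightarrow> ('a set \<times> 'a set) set" where
  "desc P A k M = {K. K = M \<or> proper_anc P A k M K}"

definition first_problematic :: "'a::order set \<Rightarrow> (nat \<Rightarrow> 'a set) \<Rightarrow> nat \<Rightarrow> 'a set \<times> 'a set \<Rightarrow> 'a set \<times> 'a set \<Rightarrow> bool" where
  "first_problematic P A k M K \<longleftrightarrow> K \<in> desc P A k M \<and> problematic P A k K \<and>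
     \<not> (\<exists>K'. K' \<in> desc P A k M \<and> proper_anc P A k K' K \<and> problematic P A k K' \<and>
            charac P K' = charac P K)"

end

theory Submission
  imports Defs
begin

lemma bip_adj_sym: "bip_adj X Y u v \<Longrightarrow> bip_adj X Y v u"
  unfolding bip_adj_def by auto

lemma rtranclp_bip_sym: "(bip_adj X Y)\<^sup>*\<^sup>* a b \<Longrightarrow> (bip_adj X Y)\<^sup>*\<^sup>* b a"
proof (induction rule: rtranclp_induct)
  case base then show ?case by simp
next
  case (step b c)
  then show ?case using bip_adj_sym converse_rtranclp_into_rtranclp by metis
qed

lemma exit_lemma: "r\<^sup>*\<^sup>* a b \<Longrightarrow> a \<in> S \<Longrightarrow> b \<notin> S \<Longrightarrow> \<exists>c d. r\<^sup>*\<^sup>* a c \<and> r c d \<and> c \<in> S \<and> d \<notin> S"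
proof (induction rule: rtranclp_induct)
  case base then show ?case by simp
next
  case (step b c)
  show ?case
  proof (cases "b \<in> S")
    case True then show ?thesis using step by blast
  next
    case False then show ?thesis using step by blast
  qed
qed

lemma sqle_trans: "sqle P B C \<Longrightarrow> sqle P C D \<Longrightarrow> sqle P B D"
proof -
  assume a: "sqle P B C" and b: "sqle P C D"
  show ?thesis unfolding sqle_def
  proof
    fix x assume x: "x \<in> B"
    then obtain c where c: "c \<in> C" "x \<le> c" "x \<in> P" using a unfolding sqle_def down_def by blast
    then obtain d where d: "d \<in> D" "c \<le> d" using b unfolding sqle_def down_def by blast
    show "x \<in> down P D" unfolding down_def using c d order_trans by blast
  qed
qed

lemma sqle_antisym:
  assumes aB: "antichain P B" and aC: "antichain P C" and bc: "sqle P B C" and cb: "sqle P C B"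
  shows "B = C"
proof -
  have 1: "x \<in> C" if x: "x \<in> B" for x
  proof -
    obtain c where c: "c \<in> C" "x \<le> c" using bc x unfolding sqle_def down_def by blast
    obtain b where b: "b \<in> B" "c \<le> b" using cb c(1) unfolding sqle_def down_def by blast
    have "x \<le> b" using c b order_trans by blast
    then have "x = b" using aB x b(1) unfolding antichain_def by blast
    then have "x = c" using c b by simp
    then show ?thesis using c by simp
  qed
  have 2: "x \<in> B" if x: "x \<in> C" for x
  proof -
    obtain c where c: "c \<in> B" "x \<le> c" using cb x unfolding sqle_def down_def by blast
    obtain b where b: "b \<in> C" "c \<le> b" using bc c(1) unfolding sqle_def down_def by blast
    have "x \<le> b" using c b order_trans by blast
    then have "x = b" using aC x b(1) unfolding antichain_def by blast
    then have "x = c" using c b by simp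
    then show ?thesis using c by simp
  qed
  show ?thesis using 1 2 by blast
qed

lemma sqltD: "sqlt P B C \<Longrightarrow> sqle P B C" "sqlt P B C \<Longrightarrow> B \<noteq> C" by (simp_all add: sqlt_def)
lemma sqltI: "sqle P B C \<Longrightarrow> B \<noteq> C \<Longrightarrow> sqlt P B C" by (simp add: sqlt_def)

locale RP =
  fixes P :: "'a::order set" and A :: "nat \<Rightarrow> 'a set" and k :: nat
  assumes reg: "regular_poset P A k"
begin

lemma R_all: "finite P \<and> 2 \<le> k \<and>
     (\<forall>i\<in>{1..k}. maximum_antichain P (A i) \<and> A i \<noteq> {}) \<and>
     (\<forall>i\<in>{1..k}. \<forall>j\<in>{1..k}. i \<noteq> j \<longrightarrow> A i \<inter> A j = {}) \<and>
     (\<Union>i\<in>{1..k}. A i) = P \<and>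
     (\<forall>i\<in>{1..k}. \<forall>j\<in>{1..k}. sqle P (A i) (A j) \<or> sqle P (A j) (A i)) \<and>
     (\<forall>i\<in>{1..k}. \<forall>j\<in>{1..k}. sqle P (A i) (A j) \<and> sqle P (A j) (A i) \<longrightarrow> A i = A j) \<and>
     (\<forall>i\<in>{1..k}. \<forall>j\<in>{1..k}. \<forall>l\<in>{1..k}.
        sqle P (A i) (A j) \<and> sqle P (A j) (A l) \<longrightarrow> sqle P (A i) (A l)) \<and>
     (\<forall>i\<in>{1..k}. sqle P (A 1) (A i) \<and> sqle P (A i) (A 2)) \<and>
     (\<forall>a\<in>A 1. \<forall>b\<in>A 2. a < b) \<and>
     (\<forall>t\<in>{2..k}. \<forall>p s. consec P A t p s \<longrightarrow> regular_bip (A p) (A s))"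
  using reg unfolding regular_poset_def .

lemma finP: "finite P" using R_all by (elim conjE)
lemma k2: "2 \<le> k" using R_all by (elim conjE)
lemma R_lev: "\<forall>i\<in>{1..k}. maximum_antichain P (A i) \<and> A i \<noteq> {}" using R_all by (elim conjE)
lemma R_disj: "\<forall>i\<in>{1..k}. \<forall>j\<in>{1..k}. i \<noteq> j \<longrightarrow> A i \<inter> A j = {}" using R_all by (elim conjE)
lemma R_lin: "\<forall>i\<in>{1..k}. \<forall>j\<in>{1..k}. sqle P (A i) (A j) \<or> sqle P (A j) (A i)" using R_all by (elim conjE)
lemma R_reg: "\<forall>t\<in>{2..k}. \<forall>p s. consec P A t p s \<longrightarrow> regular_bip (A p) (A s)" using R_all by (elim conjE)
lemma lev_max: "i \<in> {1..k} \<Longrightarrow> maximum_antichain P (A i)" using R_lev by blast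
lemma lev_ne: "i \<in> {1..k} \<Longrightarrow> A i \<noteq> {}" using R_lev by blast
lemma lev_disj: "i \<in> {1..k} \<Longrightarrow> j \<in> {1..k} \<Longrightarrow> i \<noteq> j \<Longrightarrow> A i \<inter> A j = {}"
  using R_disj by blast
lemma lev_lin: "i \<in> {1..k} \<Longrightarrow> j \<in> {1..k} \<Longrightarrow> sqle P (A i) (A j) \<or> sqle P (A j) (A i)"
  using R_lin by blast
lemma lev_reg: "t \<in> {2..k} \<Longrightarrow> consec P A t p s \<Longrightarrow> regular_bip (A p) (A s)"
  using R_reg by blast

lemma lev_anti: "i \<in> {1..k} \<Longrightarrow> antichain P (A i)"
  using lev_max unfolding maximum_antichain_def by simp
lemma lev_sub: "i \<in> {1..k} \<Longrightarrow> A i \<subseteq> P"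
  using lev_anti unfolding antichain_def by simp
lemma lev_fin: "i \<in> {1..k} \<Longrightarrow> finite (A i)"
  by (rule finite_subset[OF lev_sub finP])
lemma lev_card: "i \<in> {1..k} \<Longrightarrow> card (A i) = width P"
  using lev_max unfolding maximum_antichain_def by simp

lemma anti_card_le: "antichain P C \<Longrightarrow> card C \<le> width P"
proof -
  assume a: "antichain P C"
  have sub: "{C. antichain P C} \<subseteq> Pow P" unfolding antichain_def by auto
  have fin: "finite {C. antichain P C}" by (rule finite_subset[OF sub]) (simp add: finP)
  have "card C \<in> card ` {C. antichain P C}" using a by blast
  then show ?thesis unfolding width_def by (rule Max_ge[OF finite_imageI[OF fin]])
qed

lemma lev_eq:
  assumes i: "i \<in> {1..k}" and j: "j \<in> {1..k}" and ne: "A i \<inter> A j \<noteq> {}"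
  shows "i = j"
proof (rule ccontr)
  assume "i \<noteq> j"
  then have "A i \<inter> A j = {}" by (rule lev_disj[OF i j])
  then show False using ne by simp
qed

lemma lev_eqA:
  assumes i: "i \<in> {1..k}" and j: "j \<in> {1..k}" and e: "A i = A j"
  shows "i = j"
proof -
  have "A i \<inter> A j \<noteq> {}" using e lev_ne[OF i] by simp
  then show ?thesis by (rule lev_eq[OF i j])
qed

lemma lev_comparable:
  assumes i: "i \<in> {1..k}" and z: "z \<in> P" "z \<notin> A i"
  shows "\<exists>a\<in>A i. a < z \<or> z < a"
proof (rule ccontr)
  assume "\<not> ?thesis"
  then have nc: "\<forall>a\<in>A i. \<not> a < z \<and> \<not> z < a" by blast
  have ai: "antichain P (A i)" using lev_anti[OF i] .
  have "antichain P (insert z (A i))"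
    unfolding antichain_def
  proof (intro conjI ballI impI)
    show "insert z (A i) \<subseteq> P" using ai z unfolding antichain_def by blast
  next
    fix x y assume x: "x \<in> insert z (A i)" and y: "y \<in> insert z (A i)" and le: "x \<le> y"
    show "x = y"
    proof (cases "x = z")
      case True
      then show ?thesis using y le nc by (auto simp: order_le_less)
    next
      case xz: False
      then have xa: "x \<in> A i" using x by simp
      show ?thesis
      proof (cases "y = z")
        case True then show ?thesis using xa le nc by (auto simp: order_le_less)
      next
        case False then have "y \<in> A i" using y by simp
        then show ?thesis using ai xa le unfolding antichain_def by blast
      qed
    qed
  qed
  then have "card (insert z (A i)) \<le> width P" by (rule anti_card_le)
  moreover have "card (insert z (A i)) = width P + 1"
    using lev_fin[OF i] z lev_card[OF i] by simp
  ultimately show False by simp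
qed

lemma lev_below:
  assumes i: "i \<in> {1..k}" and j: "j \<in> {1..k}" and le: "sqle P (A i) (A j)" and z: "z \<in> A j"
  shows "\<exists>a\<in>A i. a \<le> z"
proof (cases "z \<in> A i")
  case True then show ?thesis by blast
next
  case False
  have zP: "z \<in> P" using z lev_sub[OF j] by blast
  obtain a where a: "a \<in> A i" "a < z \<or> z < a" using lev_comparable[OF i zP False] by blast
  show ?thesis
  proof (cases "a < z")
    case True then show ?thesis using a by (auto intro: less_imp_le)
  next
    case False
    with a have za: "z < a" by simp
    from le a(1) obtain z' where z': "z' \<in> A j" "a \<le> z'" unfolding sqle_def down_def by blast
    have "z < z'" using za z'(2) by simp
    then have "z \<le> z'" "z \<noteq> z'" by auto
    then show ?thesis using lev_anti[OF j] z z'(1) unfolding antichain_def by blast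
  qed
qed

lemma lev_above:
  assumes i: "i \<in> {1..k}" and j: "j \<in> {1..k}" and lt: "sqlt P (A i) (A j)" and x: "x \<in> A i"
  shows "\<exists>y\<in>A j. x < y"
proof -
  from lt x obtain y where y: "y \<in> A j" "x \<le> y" unfolding sqlt_def sqle_def down_def by blast
  have "i \<noteq> j" using sqltD(2)[OF lt] by blast
  then have "x \<noteq> y" using lev_disj[OF i j] x y(1) by blast
  then show ?thesis using y by (auto simp: order_le_less)
qed

lemma sqle_refl_lev: "i \<in> {1..k} \<Longrightarrow> sqle P (A i) (A i)"
  using lev_sub unfolding sqle_def down_def by blast

lemma lev_le_sqle:
  assumes i: "i \<in> {1..k}" and j: "j \<in> {1..k}" and x: "x \<in> A i" and z: "z \<in> A j" and le: "x \<le> z"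
  shows "sqle P (A i) (A j)"
proof (cases "sqle P (A i) (A j)")
  case True then show ?thesis .
next
  case False
  then have "sqle P (A j) (A i)" using lev_lin[OF i j] by blast
  then obtain a where a: "a \<in> A i" "z \<le> a" using z unfolding sqle_def down_def by blast
  have "x = a" using lev_anti[OF i] x a le unfolding antichain_def by (meson order_trans)
  then have "z = x" using le a by simp
  then have "i = j" using lev_eq[OF i j] x z by blast
  then show ?thesis using sqle_refl_lev[OF i] by simp
qed

lemma lev_sqlt_trans:
  assumes i: "i \<in> {1..k}" and j: "j \<in> {1..k}" and l: "l \<in> {1..k}"
    and a: "sqlt P (A i) (A j)" and b: "sqlt P (A j) (A l)"
  shows "sqlt P (A i) (A l)"
proof -
  have le: "sqle P (A i) (A l)" using sqle_trans[OF sqltD(1)[OF a] sqltD(1)[OF b]] .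
  have "A i \<noteq> A l"
  proof
    assume "A i = A l"
    then have "sqle P (A l) (A j)" using sqltD(1)[OF a] by simp
    then have "A j = A l" using sqle_antisym[OF lev_anti[OF j] lev_anti[OF l] sqltD(1)[OF b]] by blast
    then show False using sqltD(2)[OF b] by blast
  qed
  then show ?thesis using sqltI[OF le] by blast
qed

lemma pm_exists:
  assumes i: "i \<in> {1..k}" and j: "j \<in> {1..k}" and lt: "sqlt P (A i) (A j)"
    and r: "regular_bip (A i) (A j)"
  shows "\<exists>f. perfect_matching (A i) (A j) f"
proof -
  obtain x where x: "x \<in> A i" using lev_ne[OF i] by blast
  obtain y where y: "y \<in> A j" "x < y" using lev_above[OF i j lt x] by blast
  from r have "\<forall>a\<in>A i. \<forall>b\<in>A j. a < b \<longrightarrow> (\<exists>f. perfect_matching (A i) (A j) f \<and> f a = b)"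
    unfolding regular_bip_def .
  then have "\<exists>f. perfect_matching (A i) (A j) f \<and> f x = y" using x y by blast
  then show ?thesis by blast
qed

definition goodpair :: "nat \<Rightarrow> nat \<Rightarrow> bool" where
  "goodpair i j \<longleftrightarrow> i \<in> {1..k} \<and> j \<in> {1..k} \<and> sqlt P (A i) (A j) \<and> regular_bip (A i) (A j)"

lemma consec_good:
  assumes t: "t \<in> {2..k}" and c: "consec P A t p s"
  shows "goodpair p s"
proof -
  have ps: "p \<in> {1..t}" "s \<in> {1..t}" "sqlt P (A p) (A s)" using c unfolding consec_def by blast+
  have "t \<le> k" using t by simp
  then have "p \<in> {1..k}" "s \<in> {1..k}" using ps by auto
  moreover have "regular_bip (A p) (A s)" using lev_reg[OF t c] .
  ultimately show ?thesis unfolding goodpair_def using ps(3) by blast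
qed

definition ins :: "nat \<Rightarrow> nat \<Rightarrow> nat set" where
  "ins i j = {q \<in> {1..k}. sqlt P (A i) (A q) \<and> sqlt P (A q) (A j)}"

lemma ins_fin: "finite (ins i j)" unfolding ins_def by simp

lemma match:
  "i \<in> {1..k} \<Longrightarrow> j \<in> {1..k} \<Longrightarrow> sqle P (A i) (A j) \<Longrightarrow>
   \<exists>g. bij_betw g (A i) (A j) \<and> (\<forall>z\<in>A i. z \<le> g z)"
proof (induction "card (ins i j)" arbitrary: i j rule: less_induct)
  case less
  note i = less.prems(1) and j = less.prems(2)
  show ?case
  proof (cases "A i = A j")
    case True
    then show ?thesis by (intro exI[of _ id]) (auto simp: bij_betw_def)
  next
    case ne: False
    then have lt: "sqlt P (A i) (A j)" using sqltI[OF less.prems(3)] by blast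
    show ?thesis
    proof (cases "ins i j = {}")
      case True
      have "\<not> (\<exists>q\<in>{1..k}. sqlt P (A i) (A q) \<and> sqlt P (A q) (A j))"
        using True unfolding ins_def by blast
      then have "consec P A k i j" unfolding consec_def using i j lt by blast
      moreover have "k \<in> {2..k}" using k2 by simp
      ultimately have "regular_bip (A i) (A j)" using lev_reg by blast
      then obtain f where f: "perfect_matching (A i) (A j) f" using pm_exists[OF i j lt] by blast
      then have "bij_betw f (A i) (A j)" "\<forall>z\<in>A i. z \<le> f z"
        unfolding perfect_matching_def by (auto intro: less_imp_le)
      then show ?thesis by blast
    next
      case False
      then obtain q where q: "q \<in> ins i j" by blast
      have q1: "q \<in> {1..k}" "sqlt P (A i) (A q)" "sqlt P (A q) (A j)" using q unfolding ins_def by auto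
      have nq1: "q \<notin> ins i q" by (simp add: ins_def sqlt_def)
      have nq2: "q \<notin> ins q j" by (simp add: ins_def sqlt_def)
      have s1: "ins i q \<subset> ins i j"
      proof -
        have "ins i q \<subseteq> ins i j"
        proof
          fix r assume "r \<in> ins i q"
          then have r: "r \<in> {1..k}" "sqlt P (A i) (A r)" "sqlt P (A r) (A q)" by (simp_all add: ins_def)
          have "sqlt P (A r) (A j)" using lev_sqlt_trans[OF r(1) q1(1) j r(3) q1(3)] .
          then show "r \<in> ins i j" using r by (simp add: ins_def)
        qed
        then show ?thesis using q nq1 by blast
      qed
      have s2: "ins q j \<subset> ins i j"
      proof -
        have "ins q j \<subseteq> ins i j"
        proof
          fix r assume "r \<in> ins q j"
          then have r: "r \<in> {1..k}" "sqlt P (A q) (A r)" "sqlt P (A r) (A j)" by (simp_all add: ins_def)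
          have "sqlt P (A i) (A r)" using lev_sqlt_trans[OF i q1(1) r(1) q1(2) r(2)] .
          then show "r \<in> ins i j" using r by (simp add: ins_def)
        qed
        then show ?thesis using q nq2 by blast
      qed
      have c1: "card (ins i q) < card (ins i j)" using s1 ins_fin psubset_card_mono by blast
      have c2: "card (ins q j) < card (ins i j)" using s2 ins_fin psubset_card_mono by blast
      obtain g1 where g1: "bij_betw g1 (A i) (A q)" "\<forall>z\<in>A i. z \<le> g1 z"
        using less.hyps[OF c1 i q1(1)] sqltD(1)[OF q1(2)] by blast
      obtain g2 where g2: "bij_betw g2 (A q) (A j)" "\<forall>z\<in>A q. z \<le> g2 z"
        using less.hyps[OF c2 q1(1) j] sqltD(1)[OF q1(3)] by blast
      have "bij_betw (g2 \<circ> g1) (A i) (A j)" using g1(1) g2(1) bij_betw_trans by blast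
      moreover have "\<forall>z\<in>A i. z \<le> (g2 \<circ> g1) z"
      proof
        fix z assume z: "z \<in> A i"
        have "g1 z \<in> A q" using g1(1) z bij_betwE by blast
        then have "g1 z \<le> g2 (g1 z)" using g2(2) by blast
        moreover have "z \<le> g1 z" using g1(2) z by blast
        ultimately show "z \<le> (g2 \<circ> g1) z" by simp
      qed
      ultimately show ?thesis by blast
    qed
  qed
qed

end


lemma comp_nodeE:
  assumes "comp_node X Y N"
  obtains u where "u \<in> X \<union> Y" "fst N = {v. (bip_adj X Y)\<^sup>*\<^sup>* u v} \<inter> X"
    "snd N = {v. (bip_adj X Y)\<^sup>*\<^sup>* u v} \<inter> Y"
  using assms unfolding comp_node_def component_def by blast

lemma comp_node_of:
  assumes "u \<in> X \<union> Y"
  shows "comp_node X Y ({v. (bip_adj X Y)\<^sup>*\<^sup>* u v} \<inter> X, {v. (bip_adj X Y)\<^sup>*\<^sup>* u v} \<inter> Y)"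
  unfolding comp_node_def component_def using assms by auto

context RP
begin

lemma goodpairD:
  assumes "goodpair i j"
  shows "i \<in> {1..k}" "j \<in> {1..k}" "sqlt P (A i) (A j)" "regular_bip (A i) (A j)"
  using assms unfolding goodpair_def by simp_all

lemma gp_disj: "goodpair i j \<Longrightarrow> A i \<inter> A j = {}"
proof -
  assume g: "goodpair i j"
  have "A i \<noteq> A j" using sqltD(2)[OF goodpairD(3)[OF g]] .
  then have "i \<noteq> j" by blast
  then show ?thesis using lev_disj goodpairD(1,2)[OF g] by blast
qed

definition node_at :: "nat \<Rightarrow> nat \<Rightarrow> 'a set \<times> 'a set \<Rightarrow> bool" where
  "node_at i j N \<longleftrightarrow> goodpair i j \<and> comp_node (A i) (A j) N"

lemma node_atD: "node_at i j N \<Longrightarrow> goodpair i j" "node_at i j N \<Longrightarrow> comp_node (A i) (A j) N"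
  unfolding node_at_def by simp_all

lemma nd_sub:
  assumes "node_at i j N" shows "fst N \<subseteq> A i" "snd N \<subseteq> A j"
proof -
  obtain u where u: "u \<in> A i \<union> A j" "fst N = {v. (bip_adj (A i) (A j))\<^sup>*\<^sup>* u v} \<inter> A i"
    "snd N = {v. (bip_adj (A i) (A j))\<^sup>*\<^sup>* u v} \<inter> A j"
    by (rule comp_nodeE[OF node_atD(2)[OF assms]])
  show "fst N \<subseteq> A i" unfolding u(2) by (rule Int_lower2)
  show "snd N \<subseteq> A j" unfolding u(3) by (rule Int_lower2)
qed

lemma nd_closed1:
  assumes N: "node_at i j N" and z: "z \<in> fst N" and y: "y \<in> A j" and zy: "z < y"
  shows "y \<in> snd N"
proof -
  obtain u where u0: "u \<in> A i \<union> A j" and u: "fst N = {v. (bip_adj (A i) (A j))\<^sup>*\<^sup>* u v} \<inter> A i"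
    "snd N = {v. (bip_adj (A i) (A j))\<^sup>*\<^sup>* u v} \<inter> A j"
    by (rule comp_nodeE[OF node_atD(2)[OF N]])
  have zi: "z \<in> A i" and uz: "(bip_adj (A i) (A j))\<^sup>*\<^sup>* u z" using z u(1) by auto
  have "bip_adj (A i) (A j) z y" unfolding bip_adj_def using zi y zy by blast
  then have "(bip_adj (A i) (A j))\<^sup>*\<^sup>* u y" using rtranclp.rtrancl_into_rtrancl[OF uz] by blast
  then show ?thesis using u(2) y by blast
qed

lemma nd_closed2:
  assumes N: "node_at i j N" and y: "y \<in> snd N" and z: "z \<in> A i" and zy: "z < y"
  shows "z \<in> fst N"
proof -
  obtain u where u0: "u \<in> A i \<union> A j" and u: "fst N = {v. (bip_adj (A i) (A j))\<^sup>*\<^sup>* u v} \<inter> A i"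
    "snd N = {v. (bip_adj (A i) (A j))\<^sup>*\<^sup>* u v} \<inter> A j"
    by (rule comp_nodeE[OF node_atD(2)[OF N]])
  have yj: "y \<in> A j" and uy: "(bip_adj (A i) (A j))\<^sup>*\<^sup>* u y" using y u(2) by auto
  have "bip_adj (A i) (A j) y z" unfolding bip_adj_def using yj z zy by blast
  then have "(bip_adj (A i) (A j))\<^sup>*\<^sup>* u z" using rtranclp.rtrancl_into_rtrancl[OF uy] by blast
  then show ?thesis using u(1) z by blast
qed

lemma nd_pm:
  assumes N: "node_at i j N" and f: "perfect_matching (A i) (A j) f"
  shows "bij_betw f (fst N) (snd N)"
proof -
  have bf: "bij_betw f (A i) (A j)" and lt: "\<forall>x\<in>A i. x < f x"
    using f unfolding perfect_matching_def by simp_all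
  have inj: "inj_on f (fst N)"
    using inj_on_subset[OF bij_betw_imp_inj_on[OF bf] nd_sub(1)[OF N]] .
  have "f ` fst N = snd N"
  proof
    show "f ` fst N \<subseteq> snd N"
    proof
      fix y assume "y \<in> f ` fst N"
      then obtain z where z: "z \<in> fst N" "y = f z" by blast
      have zi: "z \<in> A i" using z(1) nd_sub(1)[OF N] by blast
      have "f z \<in> A j" using bf zi bij_betwE by blast
      moreover have "z < f z" using lt zi by blast
      ultimately show "y \<in> snd N" using nd_closed1[OF N z(1)] z(2) by blast
    qed
  next
    show "snd N \<subseteq> f ` fst N"
    proof
      fix y assume y: "y \<in> snd N"
      have "y \<in> A j" using y nd_sub(2)[OF N] by blast
      then obtain z where z: "z \<in> A i" "y = f z" using bf unfolding bij_betw_def by blast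
      have "z < y" using lt z by blast
      then have "z \<in> fst N" using nd_closed2[OF N y z(1)] by blast
      then show "y \<in> f ` fst N" using z(2) by blast
    qed
  qed
  then show ?thesis using inj unfolding bij_betw_def by blast
qed

lemma nd_pm_ex:
  assumes N: "node_at i j N" shows "\<exists>f. perfect_matching (A i) (A j) f"
  using pm_exists goodpairD[OF node_atD(1)[OF N]] by blast

lemma nd_ne:
  assumes N: "node_at i j N" shows "fst N \<noteq> {}" "snd N \<noteq> {}"
proof -
  obtain f where f: "perfect_matching (A i) (A j) f" using nd_pm_ex[OF N] by blast
  have b: "f ` fst N = snd N" using nd_pm[OF N f] unfolding bij_betw_def by blast
  obtain u where u: "u \<in> A i \<union> A j" "fst N = {v. (bip_adj (A i) (A j))\<^sup>*\<^sup>* u v} \<inter> A i"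
    "snd N = {v. (bip_adj (A i) (A j))\<^sup>*\<^sup>* u v} \<inter> A j"
    by (rule comp_nodeE[OF node_atD(2)[OF N]])
  have "u \<in> fst N \<or> u \<in> snd N" using u by auto
  then have "fst N \<noteq> {}" using b by blast
  then show "fst N \<noteq> {}" "snd N \<noteq> {}" using b by auto
qed

lemma nd_fin:
  assumes N: "node_at i j N" shows "finite (fst N)" "finite (snd N)"
  using finite_subset[OF nd_sub(1)[OF N] lev_fin[OF goodpairD(1)[OF node_atD(1)[OF N]]]]
    finite_subset[OF nd_sub(2)[OF N] lev_fin[OF goodpairD(2)[OF node_atD(1)[OF N]]]] by simp_all

lemma nd_card:
  assumes N: "node_at i j N" shows "card (fst N) = card (snd N)"
proof -
  obtain f where f: "perfect_matching (A i) (A j) f" using nd_pm_ex[OF N] by blast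
  show ?thesis using bij_betw_same_card[OF nd_pm[OF N f]] .
qed

lemma nd_Int:
  assumes N: "node_at i j N" shows "fst N \<subseteq> Int_node P N" "snd N \<subseteq> Int_node P N"
proof -
  obtain f where f: "perfect_matching (A i) (A j) f" using nd_pm_ex[OF N] by blast
  have bf: "bij_betw f (fst N) (snd N)" using nd_pm[OF N f] .
  have lt: "\<forall>x\<in>A i. x < f x" using f unfolding perfect_matching_def by simp
  have gi: "A i \<subseteq> P" "A j \<subseteq> P" using lev_sub goodpairD[OF node_atD(1)[OF N]] by auto
  show "fst N \<subseteq> Int_node P N"
  proof
    fix z assume z: "z \<in> fst N"
    have zi: "z \<in> A i" using z nd_sub(1)[OF N] by blast
    have zP: "z \<in> P" using zi gi by blast
    have "f z \<in> snd N" using bf z bij_betwE by blast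
    moreover have "z \<le> f z" using lt zi less_imp_le by blast
    ultimately have "z \<in> down P (snd N)" unfolding down_def using zP by blast
    moreover have "z \<in> up P (fst N)" unfolding up_def using zP z by blast
    ultimately show "z \<in> Int_node P N" unfolding Int_node_def by blast
  qed
  show "snd N \<subseteq> Int_node P N"
  proof
    fix y assume y: "y \<in> snd N"
    have yP: "y \<in> P" using y nd_sub(2)[OF N] gi by blast
    obtain z where z: "z \<in> fst N" "y = f z" using bf y unfolding bij_betw_def by blast
    have zi: "z \<in> A i" using z nd_sub(1)[OF N] by blast
    have "z \<le> y" using lt zi z(2) less_imp_le by blast
    then have "y \<in> up P (fst N)" unfolding up_def using yP z(1) by blast
    moreover have "y \<in> down P (snd N)" unfolding down_def using yP y by blast
    ultimately show "y \<in> Int_node P N" unfolding Int_node_def by blast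
  qed
qed

lemma nd_eq:
  assumes N: "node_at i j N" and N': "node_at i j N'"
    and v: "v \<in> (fst N \<inter> fst N') \<union> (snd N \<inter> snd N')"
  shows "N = N'"
proof -
  let ?G = "bip_adj (A i) (A j)"
  obtain u where u0: "u \<in> A i \<union> A j" and u: "fst N = {v. ?G\<^sup>*\<^sup>* u v} \<inter> A i" "snd N = {v. ?G\<^sup>*\<^sup>* u v} \<inter> A j"
    by (rule comp_nodeE[OF node_atD(2)[OF N]])
  obtain u' where u0': "u' \<in> A i \<union> A j" and u': "fst N' = {v. ?G\<^sup>*\<^sup>* u' v} \<inter> A i" "snd N' = {v. ?G\<^sup>*\<^sup>* u' v} \<inter> A j"
    by (rule comp_nodeE[OF node_atD(2)[OF N']])
  have uv: "?G\<^sup>*\<^sup>* u v" and u'v: "?G\<^sup>*\<^sup>* u' v" using v u u' by auto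
  have uu': "?G\<^sup>*\<^sup>* u u'" using rtranclp_trans[OF uv rtranclp_bip_sym[OF u'v]] .
  have u'u: "?G\<^sup>*\<^sup>* u' u" using rtranclp_bip_sym[OF uu'] .
  have "{v. ?G\<^sup>*\<^sup>* u v} = {v. ?G\<^sup>*\<^sup>* u' v}"
  proof (intro equalityI subsetI)
    fix w assume "w \<in> {v. ?G\<^sup>*\<^sup>* u v}"
    then show "w \<in> {v. ?G\<^sup>*\<^sup>* u' v}" using rtranclp_trans[OF u'u] by blast
  next
    fix w assume "w \<in> {v. ?G\<^sup>*\<^sup>* u' v}"
    then show "w \<in> {v. ?G\<^sup>*\<^sup>* u v}" using rtranclp_trans[OF uu'] by blast
  qed
  then have "fst N = fst N'" "snd N = snd N'" using u u' by simp_all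
  then show ?thesis by (simp add: prod_eq_iff)
qed


lemma nd_expand:
  assumes N: "node_at i j N" and B: "B \<subseteq> fst N" "B \<noteq> {}" "B \<noteq> fst N"
  shows "card B + 1 \<le> card {y \<in> snd N. \<exists>z\<in>B. z < y}"
proof (rule ccontr)
  let ?G = "bip_adj (A i) (A j)"
  define NB where "NB = {y \<in> snd N. \<exists>z\<in>B. z < y}"
  assume "\<not> card B + 1 \<le> card {y \<in> snd N. \<exists>z\<in>B. z < y}"
  then have cle: "card NB \<le> card B" unfolding NB_def by simp
  have gp: "goodpair i j" using node_atD(1)[OF N] .
  have reg: "regular_bip (A i) (A j)" using goodpairD(4)[OF gp] .
  have dis: "A i \<inter> A j = {}" using gp_disj[OF gp] .
  obtain f where f: "perfect_matching (A i) (A j) f" using nd_pm_ex[OF N] by blast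
  have bf: "bij_betw f (fst N) (snd N)" using nd_pm[OF N f] .
  have ltf: "\<forall>x\<in>A i. x < f x" using f unfolding perfect_matching_def by simp
  have sN: "fst N \<subseteq> A i" "snd N \<subseteq> A j" using nd_sub[OF N] by simp_all
  have finNB: "finite NB" unfolding NB_def using nd_fin(2)[OF N] by simp
  have finB: "finite B" using finite_subset[OF B(1) nd_fin(1)[OF N]] .
  have imgsub: "g ` B \<subseteq> NB" if g: "perfect_matching (A i) (A j) g" for g
  proof
    fix y assume "y \<in> g ` B"
    then obtain z where z: "z \<in> B" "y = g z" by blast
    have zi: "z \<in> A i" using z(1) B(1) sN by blast
    have bg: "bij_betw g (A i) (A j)" and lg: "\<forall>x\<in>A i. x < g x" using g unfolding perfect_matching_def by simp_all
    have "g z \<in> A j" using bg zi bij_betwE by blast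
    moreover have "z < g z" using lg zi by blast
    ultimately have "g z \<in> snd N" using nd_closed1[OF N] z(1) B(1) by blast
    then show "y \<in> NB" unfolding NB_def using z \<open>z < g z\<close> by blast
  qed
  have imgcard: "card (g ` B) = card B" if g: "perfect_matching (A i) (A j) g" for g
  proof -
    have bg: "bij_betw g (A i) (A j)" using g unfolding perfect_matching_def by simp
    have "inj_on g B" using inj_on_subset[OF bij_betw_imp_inj_on[OF bg]] B(1) sN by blast
    then show ?thesis by (rule card_image)
  qed
  have imgeq: "g ` B = NB" if g: "perfect_matching (A i) (A j) g" for g
  proof -
    have "card (g ` B) = card NB" using imgcard[OF g] cle card_mono[OF finNB imgsub[OF g]] by simp
    then show ?thesis using card_subset_eq[OF finNB imgsub[OF g]] by blast
  qed
  obtain v where v: "v \<in> B" using B(2) by blast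
  obtain w where w: "w \<in> fst N" "w \<notin> B" using B(1) B(3) by blast
  obtain u where u0: "u \<in> A i \<union> A j" and u: "fst N = {v. ?G\<^sup>*\<^sup>* u v} \<inter> A i"
    "snd N = {v. ?G\<^sup>*\<^sup>* u v} \<inter> A j"
    by (rule comp_nodeE[OF node_atD(2)[OF N]])
  have uv: "?G\<^sup>*\<^sup>* u v" using v B(1) u(1) by blast
  have uw: "?G\<^sup>*\<^sup>* u w" using w(1) u(1) by blast
  have vw: "?G\<^sup>*\<^sup>* v w" using rtranclp_trans[OF rtranclp_bip_sym[OF uv] uw] .
  define S where "S = B \<union> f ` B"
  have fBj: "f ` B \<subseteq> A j" using imgsub[OF f] sN unfolding NB_def by blast
  have vS: "v \<in> S" using v S_def by blast
  have wS: "w \<notin> S" using w fBj dis sN unfolding S_def by blast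
  obtain c d where cd: "?G\<^sup>*\<^sup>* v c" "?G c d" "c \<in> S" "d \<notin> S"
    using exit_lemma[OF vw vS wS] by blast
  from cd(2) have "(c \<in> A i \<and> d \<in> A j \<and> c < d) \<or> (c \<in> A j \<and> d \<in> A i \<and> d < c)"
    unfolding bip_adj_def by blast
  then show False
  proof
    assume h: "c \<in> A i \<and> d \<in> A j \<and> c < d"
    then have "c \<notin> f ` B" using fBj dis by blast
    then have cB: "c \<in> B" using cd(3) S_def by blast
    have "d \<in> snd N" using nd_closed1[OF N] cB B(1) h by blast
    then have "d \<in> NB" unfolding NB_def using cB h by blast
    then have "d \<in> S" using imgeq[OF f] S_def by blast
    then show False using cd(4) by blast
  next
    assume h: "c \<in> A j \<and> d \<in> A i \<and> d < c"
    then have "c \<notin> B" using B(1) sN dis by blast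
    then have cfB: "c \<in> f ` B" using cd(3) S_def by blast
    have dB: "d \<notin> B" using cd(4) S_def by blast
    from reg have "\<forall>a\<in>A i. \<forall>b\<in>A j. a < b \<longrightarrow> (\<exists>g. perfect_matching (A i) (A j) g \<and> g a = b)"
      unfolding regular_bip_def .
    then obtain g where g: "perfect_matching (A i) (A j) g" "g d = c" using h by blast
    have "c \<in> g ` B" using cfB imgeq[OF f] imgeq[OF g(1)] by simp
    then obtain z where z: "z \<in> B" "g z = c" by blast
    have bg: "bij_betw g (A i) (A j)" using g(1) unfolding perfect_matching_def by simp
    have "z = d" using bij_betw_imp_inj_on[OF bg] z g(2) h B(1) sN unfolding inj_on_def by blast
    then show False using z(1) dB by blast
  qed
qed

definition partial :: "'a \<Rightarrow> 'a set \<times> 'a set \<Rightarrow> bool" where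
  "partial x N \<longleftrightarrow> up P {x} \<inter> fst N \<noteq> {} \<and> \<not> fst N \<subseteq> up P {x}"

lemma nd_gain:
  assumes N: "node_at i j N"
  shows "card (up P {x} \<inter> fst N) + (if partial x N then 1 else 0) \<le> card (up P {x} \<inter> snd N)"
proof -
  define T where "T = up P {x}"
  define B where "B = T \<inter> fst N"
  obtain f where f: "perfect_matching (A i) (A j) f" using nd_pm_ex[OF N] by blast
  have bf: "bij_betw f (fst N) (snd N)" using nd_pm[OF N f] .
  have ltf: "\<forall>x\<in>A i. x < f x" using f unfolding perfect_matching_def by simp
  have sN: "fst N \<subseteq> A i" "snd N \<subseteq> A j" using nd_sub[OF N] by simp_all
  have jP: "A j \<subseteq> P" using lev_sub goodpairD(2)[OF node_atD(1)[OF N]] by blast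
  have finT: "finite (T \<inter> snd N)" using nd_fin(2)[OF N] by simp
  have fB: "f ` B \<subseteq> T \<inter> snd N"
  proof
    fix y assume "y \<in> f ` B"
    then obtain z where z: "z \<in> B" "y = f z" by blast
    have zN: "z \<in> fst N" and xz: "x \<le> z" using z(1) unfolding B_def T_def up_def by auto
    have "z < f z" using ltf zN sN by blast
    then have "x \<le> f z" using xz by simp
    moreover have "f z \<in> snd N" using bf zN bij_betwE by blast
    ultimately show "y \<in> T \<inter> snd N" unfolding T_def up_def using z(2) sN jP by blast
  qed
  have injB: "inj_on f B" using inj_on_subset[OF bij_betw_imp_inj_on[OF bf]] unfolding B_def by blast
  have c1: "card B \<le> card (T \<inter> snd N)"
    using card_mono[OF finT fB] card_image[OF injB] by simp
  show ?thesis
  proof (cases "partial x N")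
    case False
    then show ?thesis using c1 unfolding B_def T_def by simp
  next
    case True
    then have Bne: "B \<noteq> {}" and Bnf: "B \<noteq> fst N" unfolding partial_def B_def T_def by blast+
    have e: "card B + 1 \<le> card {y \<in> snd N. \<exists>z\<in>B. z < y}"
      using nd_expand[OF N _ Bne Bnf] unfolding B_def by blast
    have "{y \<in> snd N. \<exists>z\<in>B. z < y} \<subseteq> T \<inter> snd N"
    proof
      fix y assume "y \<in> {y \<in> snd N. \<exists>z\<in>B. z < y}"
      then obtain z where y: "y \<in> snd N" "z \<in> B" "z < y" by blast
      have "x \<le> z" using y(2) unfolding B_def T_def up_def by auto
      then have "x \<le> y" using y(3) by simp
      then show "y \<in> T \<inter> snd N" unfolding T_def up_def using y(1) sN jP by blast
    qed
    then have "card {y \<in> snd N. \<exists>z\<in>B. z < y} \<le> card (T \<inter> snd N)" using card_mono[OF finT] by blast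
    then show ?thesis using e True unfolding B_def T_def by simp
  qed
qed


lemma childofE:
  assumes "childof P A k M N"
  obtains t p s where "t \<in> {3..k}" "consec P A (t - 1) p s" "sqlt P (A p) (A t)" "sqlt P (A t) (A s)"
    "comp_node (A p) (A s) N" "comp_node (A p) (A t) M \<or> comp_node (A t) (A s) M"
    "Int_node P M \<subset> Int_node P N"
  using assms unfolding childof_def by blast

lemma childof_Int: "childof P A k M N \<Longrightarrow> Int_node P M \<subset> Int_node P N"
  by (erule childofE) blast

lemma desc_Int:
  assumes "K \<in> desc P A k N" shows "Int_node P K \<subseteq> Int_node P N"
proof -
  have "K = N \<or> (childof P A k)\<^sup>+\<^sup>+ K N" using assms unfolding desc_def proper_anc_def by simp
  then show ?thesis
  proof
    assume "(childof P A k)\<^sup>+\<^sup>+ K N"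
    then show ?thesis
    proof (induction rule: tranclp_induct)
      case (base y) then show ?case using childof_Int by blast
    next
      case (step y z) then show ?case using childof_Int by blast
    qed
  qed simp
qed

lemma desc_cases:
  assumes "K \<in> desc P A k N"
  shows "K = N \<or> (\<exists>C. childof P A k C N \<and> K \<in> desc P A k C)"
proof -
  have "K = N \<or> (childof P A k)\<^sup>+\<^sup>+ K N" using assms unfolding desc_def proper_anc_def by simp
  then show ?thesis
  proof
    assume "(childof P A k)\<^sup>+\<^sup>+ K N"
    then have "childof P A k K N \<or> (\<exists>c. (childof P A k)\<^sup>+\<^sup>+ K c \<and> childof P A k c N)"
      by (cases rule: tranclp.cases) blast+
    then show ?thesis
    proof
      assume h: "childof P A k K N"
      have "K \<in> desc P A k K" unfolding desc_def by simp
      then show ?thesis using h by blast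
    next
      assume "\<exists>c. (childof P A k)\<^sup>+\<^sup>+ K c \<and> childof P A k c N"
      then obtain c where h: "(childof P A k)\<^sup>+\<^sup>+ K c" "childof P A k c N" by blast
      then have "K \<in> desc P A k c" unfolding desc_def proper_anc_def by simp
      then show ?thesis using h by blast
    qed
  qed simp
qed

lemma childof_inside:
  assumes N: "node_at p s N" and c: "childof P A k C N"
  shows "\<exists>t'. t' \<in> ins p s \<and> (\<forall>q\<in>{1..t' - 1}. \<not> (sqlt P (A p) (A q) \<and> sqlt P (A q) (A s)))
     \<and> (comp_node (A p) (A t') C \<or> comp_node (A t') (A s) C) \<and> Int_node P C \<subset> Int_node P N"
proof -
  obtain t p' s' where t: "t \<in> {3..k}" "consec P A (t - 1) p' s'" "sqlt P (A p') (A t)" "sqlt P (A t) (A s')"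
    "comp_node (A p') (A s') N" "comp_node (A p') (A t) C \<or> comp_node (A t) (A s') C"
    "Int_node P C \<subset> Int_node P N"
    using c by (rule childofE)
  have gp: "goodpair p s" using node_atD(1)[OF N] .
  have pk: "p \<in> {1..k}" "s \<in> {1..k}" using goodpairD[OF gp] by simp_all
  have p'k: "p' \<in> {1..k}" "s' \<in> {1..k}" using t(1,2) unfolding consec_def by auto
  obtain u where u0: "u \<in> A p' \<union> A s'" and u: "fst N = {v. (bip_adj (A p') (A s'))\<^sup>*\<^sup>* u v} \<inter> A p'"
    "snd N = {v. (bip_adj (A p') (A s'))\<^sup>*\<^sup>* u v} \<inter> A s'"
    by (rule comp_nodeE[OF t(5)])
  have "fst N \<subseteq> A p'" "snd N \<subseteq> A s'" using u by auto
  moreover have "fst N \<subseteq> A p" "snd N \<subseteq> A s" using nd_sub[OF N] by simp_all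
  moreover have "fst N \<noteq> {}" "snd N \<noteq> {}" using nd_ne[OF N] by simp_all
  ultimately have "A p \<inter> A p' \<noteq> {}" "A s \<inter> A s' \<noteq> {}" by blast+
  then have pp: "p = p'" "s = s'" using lev_eq pk p'k by blast+
  have tk: "t \<in> {1..k}" using t(1) by simp
  have "t \<in> ins p s" unfolding ins_def using tk t(3,4) pp by simp
  moreover have "\<forall>q\<in>{1..t - 1}. \<not> (sqlt P (A p) (A q) \<and> sqlt P (A q) (A s))"
    using t(2) pp unfolding consec_def by blast
  ultimately show ?thesis using t(6,7) pp by blast
qed


lemma lift_lo:
  assumes N: "node_at p s N" and g1: "goodpair p t" and g2: "goodpair t s"
    and r: "(bip_adj (A p) (A t))\<^sup>*\<^sup>* z v" and z: "z \<in> fst N"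
  shows "(v \<in> A p \<longrightarrow> v \<in> fst N) \<and> (v \<in> A t \<longrightarrow> (\<exists>y\<in>snd N. v < y))"
  using r
proof (induction rule: rtranclp_induct)
  case base
  have "z \<in> A p" using z nd_sub(1)[OF N] by blast
  then have "z \<notin> A t" using gp_disj[OF g1] by blast
  then show ?case using z by blast
next
  case (step v v')
  have dpt: "A p \<inter> A t = {}" using gp_disj[OF g1] .
  from step.hyps(2) have "(v \<in> A p \<and> v' \<in> A t \<and> v < v') \<or> (v \<in> A t \<and> v' \<in> A p \<and> v' < v)"
    unfolding bip_adj_def by blast
  then show ?case
  proof
    assume h: "v \<in> A p \<and> v' \<in> A t \<and> v < v'"
    then have vN: "v \<in> fst N" using step.IH by blast
    obtain y' where y': "y' \<in> A s" "v' < y'"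
      using lev_above[OF goodpairD(1,2,3)[OF g2]] h by blast
    have "v < y'" using h y'(2) less_trans by blast
    then have "y' \<in> snd N" using nd_closed1[OF N vN y'(1)] by blast
    then show ?case using h y' dpt by blast
  next
    assume h: "v \<in> A t \<and> v' \<in> A p \<and> v' < v"
    then obtain y where y: "y \<in> snd N" "v < y" using step.IH by blast
    have "v' < y" using h y(2) less_trans by blast
    then have "v' \<in> fst N" using nd_closed2[OF N y(1)] h by blast
    then show ?case using h dpt by blast
  qed
qed

lemma lift_up:
  assumes N: "node_at p s N" and g1: "goodpair p t" and g2: "goodpair t s"
    and r: "(bip_adj (A t) (A s))\<^sup>*\<^sup>* y v" and y: "y \<in> snd N"
  shows "(v \<in> A s \<longrightarrow> v \<in> snd N) \<and> (v \<in> A t \<longrightarrow> (\<exists>y'\<in>snd N. v < y'))"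
  using r
proof (induction rule: rtranclp_induct)
  case base
  have "y \<in> A s" using y nd_sub(2)[OF N] by blast
  then have "y \<notin> A t" using gp_disj[OF g2] by blast
  then show ?case using y by blast
next
  case (step v v')
  have dts: "A t \<inter> A s = {}" using gp_disj[OF g2] .
  have dpt: "A p \<inter> A t = {}" using gp_disj[OF g1] .
  from step.hyps(2) have "(v \<in> A t \<and> v' \<in> A s \<and> v < v') \<or> (v \<in> A s \<and> v' \<in> A t \<and> v' < v)"
    unfolding bip_adj_def by blast
  then show ?case
  proof
    assume h: "v \<in> A t \<and> v' \<in> A s \<and> v < v'"
    then obtain y' where y': "y' \<in> snd N" "v < y'" using step.IH by blast
    have g1': "p \<in> {1..k}" "t \<in> {1..k}" "sqle P (A p) (A t)"
      using goodpairD[OF g1] sqltD(1) by auto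
    obtain a where a: "a \<in> A p" "a \<le> v" using lev_below[OF g1'] h by blast
    have "a \<noteq> v" using a(1) h dpt by blast
    then have av: "a < v" using a(2) by simp
    have "a < y'" using av y'(2) less_trans by blast
    then have aN: "a \<in> fst N" using nd_closed2[OF N y'(1) a(1)] by blast
    have "a < v'" using av h less_trans by blast
    then have "v' \<in> snd N" using nd_closed1[OF N aN] h by blast
    then show ?case using h dts by blast
  next
    assume h: "v \<in> A s \<and> v' \<in> A t \<and> v' < v"
    then have "v \<in> snd N" using step.IH by blast
    then show ?case using h dts by blast
  qed
qed

definition CL :: "nat \<Rightarrow> nat \<Rightarrow> 'a \<Rightarrow> 'a set \<times> 'a set" where
  "CL i j a = ({w. (bip_adj (A i) (A j))\<^sup>*\<^sup>* a w} \<inter> A i, {w. (bip_adj (A i) (A j))\<^sup>*\<^sup>* a w} \<inter> A j)"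

lemma CL_node: "a \<in> A i \<union> A j \<Longrightarrow> comp_node (A i) (A j) (CL i j a)"
  unfolding CL_def by (rule comp_node_of)

lemma CL_mem: "a \<in> A i \<union> A j \<Longrightarrow> a \<in> fst (CL i j a) \<union> snd (CL i j a)"
  unfolding CL_def by auto

lemma CL_adj: "a \<in> A i \<Longrightarrow> b \<in> A j \<Longrightarrow> a < b \<Longrightarrow> b \<in> snd (CL i j a)"
proof -
  assume h: "a \<in> A i" "b \<in> A j" "a < b"
  then have "bip_adj (A i) (A j) a b" unfolding bip_adj_def by blast
  then show ?thesis unfolding CL_def using h by auto
qed

lemma CL_adj2: "a \<in> A i \<Longrightarrow> b \<in> A j \<Longrightarrow> a < b \<Longrightarrow> a \<in> fst (CL i j b)"
proof -
  assume h: "a \<in> A i" "b \<in> A j" "a < b"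
  then have "bip_adj (A i) (A j) b a" unfolding bip_adj_def by blast
  then show ?thesis unfolding CL_def using h by auto
qed


definition Lo :: "nat \<Rightarrow> nat \<Rightarrow> 'a set \<times> 'a set \<Rightarrow> ('a set \<times> 'a set) set" where
  "Lo p t N = {C. comp_node (A p) (A t) C \<and> fst C \<subseteq> fst N}"
definition Up :: "nat \<Rightarrow> nat \<Rightarrow> 'a set \<times> 'a set \<Rightarrow> ('a set \<times> 'a set) set" where
  "Up t s N = {C. comp_node (A t) (A s) C \<and> snd C \<subseteq> snd N}"
definition Zs :: "nat \<Rightarrow> 'a set \<times> 'a set \<Rightarrow> 'a set" where
  "Zs t N = {z \<in> A t. \<exists>y\<in>snd N. z < y}"

lemma Lo_node: "goodpair p t \<Longrightarrow> C \<in> Lo p t N \<Longrightarrow> node_at p t C"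
  unfolding Lo_def node_at_def by simp
lemma Up_node: "goodpair t s \<Longrightarrow> C \<in> Up t s N \<Longrightarrow> node_at t s C"
  unfolding Up_def node_at_def by simp

context
  fixes p s t N
  assumes N: "node_at p s N" and g1: "goodpair p t" and g2: "goodpair t s"
begin

lemma CL_Lo: assumes a: "a \<in> fst N" shows "CL p t a \<in> Lo p t N"
proof -
  have ap: "a \<in> A p" using a nd_sub(1)[OF N] by blast
  have "comp_node (A p) (A t) (CL p t a)" using CL_node ap by blast
  moreover have "fst (CL p t a) \<subseteq> fst N"
  proof
    fix w assume "w \<in> fst (CL p t a)"
    then have "(bip_adj (A p) (A t))\<^sup>*\<^sup>* a w" "w \<in> A p" unfolding CL_def by auto
    then show "w \<in> fst N" using lift_lo[OF N g1 g2 _ a] by blast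
  qed
  ultimately show ?thesis unfolding Lo_def by blast
qed

lemma CU_Up: assumes y: "y \<in> snd N" shows "CL t s y \<in> Up t s N"
proof -
  have ys: "y \<in> A s" using y nd_sub(2)[OF N] by blast
  have "comp_node (A t) (A s) (CL t s y)" using CL_node ys by blast
  moreover have "snd (CL t s y) \<subseteq> snd N"
  proof
    fix w assume "w \<in> snd (CL t s y)"
    then have "(bip_adj (A t) (A s))\<^sup>*\<^sup>* y w" "w \<in> A s" unfolding CL_def by auto
    then show "w \<in> snd N" using lift_up[OF N g1 g2 _ y] by blast
  qed
  ultimately show ?thesis unfolding Up_def by blast
qed

lemma U1: "(\<Union>C\<in>Lo p t N. fst C) = fst N"
proof
  show "(\<Union>C\<in>Lo p t N. fst C) \<subseteq> fst N" unfolding Lo_def by blast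
  show "fst N \<subseteq> (\<Union>C\<in>Lo p t N. fst C)"
  proof
    fix z assume z: "z \<in> fst N"
    have "z \<in> A p" using z nd_sub(1)[OF N] by blast
    then have "z \<in> fst (CL p t z)" unfolding CL_def by simp
    then show "z \<in> (\<Union>C\<in>Lo p t N. fst C)" using CL_Lo[OF z] by blast
  qed
qed

lemma U4: "(\<Union>C\<in>Up t s N. snd C) = snd N"
proof
  show "(\<Union>C\<in>Up t s N. snd C) \<subseteq> snd N" unfolding Up_def by blast
  show "snd N \<subseteq> (\<Union>C\<in>Up t s N. snd C)"
  proof
    fix z assume z: "z \<in> snd N"
    have "z \<in> A s" using z nd_sub(2)[OF N] by blast
    then have "z \<in> snd (CL t s z)" unfolding CL_def by simp
    then show "z \<in> (\<Union>C\<in>Up t s N. snd C)" using CU_Up[OF z] by blast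
  qed
qed

lemma U2: "(\<Union>C\<in>Lo p t N. snd C) = Zs t N"
proof
  show "(\<Union>C\<in>Lo p t N. snd C) \<subseteq> Zs t N"
  proof
    fix v assume "v \<in> (\<Union>C\<in>Lo p t N. snd C)"
    then obtain C where C: "C \<in> Lo p t N" "v \<in> snd C" by blast
    have NC: "node_at p t C" using Lo_node[OF g1 C(1)] .
    obtain f where f: "perfect_matching (A p) (A t) f" using nd_pm_ex[OF NC] by blast
    have bf: "bij_betw f (fst C) (snd C)" using nd_pm[OF NC f] .
    obtain a where a: "a \<in> fst C" "v = f a" using bf C(2) unfolding bij_betw_def by blast
    have aN: "a \<in> fst N" using a(1) C(1) unfolding Lo_def by blast
    have "a < f a" using f a(1) nd_sub(1)[OF NC] unfolding perfect_matching_def by blast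
    then have av: "a < v" using a(2) by simp
    have vt: "v \<in> A t" using C(2) nd_sub(2)[OF NC] by blast
    obtain y' where y': "y' \<in> A s" "v < y'" using lev_above[OF goodpairD(1,2,3)[OF g2] vt] by blast
    have "a < y'" using av y'(2) less_trans by blast
    then have "y' \<in> snd N" using nd_closed1[OF N aN y'(1)] by blast
    then show "v \<in> Zs t N" unfolding Zs_def using vt y'(2) by blast
  qed
  show "Zs t N \<subseteq> (\<Union>C\<in>Lo p t N. snd C)"
  proof
    fix z assume "z \<in> Zs t N"
    then obtain y where z: "z \<in> A t" "y \<in> snd N" "z < y" unfolding Zs_def by blast
    have g1': "p \<in> {1..k}" "t \<in> {1..k}" "sqle P (A p) (A t)"
      using goodpairD[OF g1] sqltD(1) by auto
    obtain a where a: "a \<in> A p" "a \<le> z" using lev_below[OF g1' z(1)] by blast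
    have "a \<noteq> z" using a(1) z(1) gp_disj[OF g1] by blast
    then have az: "a < z" using a(2) by simp
    have "a < y" using az z(3) less_trans by blast
    then have aN: "a \<in> fst N" using nd_closed2[OF N z(2) a(1)] by blast
    have "z \<in> snd (CL p t a)" using CL_adj[OF a(1) z(1) az] .
    then show "z \<in> (\<Union>C\<in>Lo p t N. snd C)" using CL_Lo[OF aN] by blast
  qed
qed

lemma U3: "(\<Union>C\<in>Up t s N. fst C) = Zs t N"
proof
  show "(\<Union>C\<in>Up t s N. fst C) \<subseteq> Zs t N"
  proof
    fix v assume "v \<in> (\<Union>C\<in>Up t s N. fst C)"
    then obtain C where C: "C \<in> Up t s N" "v \<in> fst C" by blast
    have NC: "node_at t s C" using Up_node[OF g2 C(1)] .
    obtain f where f: "perfect_matching (A t) (A s) f" using nd_pm_ex[OF NC] by blast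
    have bf: "bij_betw f (fst C) (snd C)" using nd_pm[OF NC f] .
    have "f v \<in> snd C" using bf C(2) bij_betwE by blast
    then have fvN: "f v \<in> snd N" using C(1) unfolding Up_def by blast
    have vt: "v \<in> A t" using C(2) nd_sub(1)[OF NC] by blast
    have "v < f v" using f vt unfolding perfect_matching_def by blast
    then show "v \<in> Zs t N" unfolding Zs_def using vt fvN by blast
  qed
  show "Zs t N \<subseteq> (\<Union>C\<in>Up t s N. fst C)"
  proof
    fix z assume "z \<in> Zs t N"
    then obtain y where z: "z \<in> A t" "y \<in> snd N" "z < y" unfolding Zs_def by blast
    have ys: "y \<in> A s" using z(2) nd_sub(2)[OF N] by blast
    have "z \<in> fst (CL t s y)" using CL_adj2[OF z(1) ys z(3)] .
    then show "z \<in> (\<Union>C\<in>Up t s N. fst C)" using CU_Up[OF z(2)] by blast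
  qed
qed

lemma Lo_fin: "finite (Lo p t N)"
proof -
  have "Lo p t N \<subseteq> Pow (A p) \<times> Pow (A t)"
  proof
    fix C assume "C \<in> Lo p t N"
    then have "node_at p t C" using Lo_node[OF g1] by blast
    then have "fst C \<subseteq> A p" "snd C \<subseteq> A t" using nd_sub by blast+
    then show "C \<in> Pow (A p) \<times> Pow (A t)" by (cases C) auto
  qed
  moreover have "finite (Pow (A p) \<times> Pow (A t))" using lev_fin goodpairD(1,2)[OF g1] by simp
  ultimately show ?thesis using finite_subset by blast
qed

lemma Up_fin: "finite (Up t s N)"
proof -
  have "Up t s N \<subseteq> Pow (A t) \<times> Pow (A s)"
  proof
    fix C assume "C \<in> Up t s N"
    then have "node_at t s C" using Up_node[OF g2] by blast
    then have "fst C \<subseteq> A t" "snd C \<subseteq> A s" using nd_sub by blast+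
    then show "C \<in> Pow (A t) \<times> Pow (A s)" by (cases C) auto
  qed
  moreover have "finite (Pow (A t) \<times> Pow (A s))" using lev_fin goodpairD(1,2)[OF g2] by simp
  ultimately show ?thesis using finite_subset by blast
qed

lemma LoUp_disj: "Lo p t N \<inter> Up t s N = {}"
proof (rule ccontr)
  assume "Lo p t N \<inter> Up t s N \<noteq> {}"
  then obtain C where C: "C \<in> Lo p t N" "C \<in> Up t s N" by blast
  have n1: "node_at p t C" using Lo_node[OF g1 C(1)] .
  have n2: "node_at t s C" using Up_node[OF g2 C(2)] .
  have "fst C \<noteq> {}" using nd_ne(1)[OF n1] .
  moreover have "fst C \<subseteq> A p" "fst C \<subseteq> A t" using nd_sub(1)[OF n1] nd_sub(1)[OF n2] by simp_all
  ultimately show False using gp_disj[OF g1] by blast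
qed

end

lemma sum_card_UN:
  assumes fin: "finite I" and fh: "\<forall>C\<in>I. finite (h C)"
    and dj: "\<forall>C\<in>I. \<forall>C'\<in>I. C \<noteq> C' \<longrightarrow> h C \<inter> h C' = {}"
  shows "(\<Sum>C\<in>I. card (T \<inter> h C)) = card (T \<inter> (\<Union>C\<in>I. h C))"
proof -
  have "card (\<Union>C\<in>I. T \<inter> h C) = (\<Sum>C\<in>I. card (T \<inter> h C))"
    by (rule card_UN_disjoint[OF fin]) (use fh dj in auto)
  moreover have "(\<Union>C\<in>I. T \<inter> h C) = T \<inter> (\<Union>C\<in>I. h C)" by blast
  ultimately show ?thesis by simp
qed

lemma nodes_disj:
  assumes "node_at i j C" "node_at i j C'" "C \<noteq> C'"
  shows "fst C \<inter> fst C' = {}" "snd C \<inter> snd C' = {}"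
  using nd_eq[OF assms(1,2)] assms(3) by blast+


lemma is_node_at:
  assumes "is_node P A k K"
  obtains t p s where "t \<in> {2..k}" "consec P A t p s" "node_at p s K"
proof -
  obtain t p s where h: "t \<in> {2..k}" "consec P A t p s" "comp_node (A p) (A s) K"
    using assms unfolding is_node_def by blast
  have "goodpair p s" using consec_good[OF h(1,2)] .
  then have "node_at p s K" using h(3) unfolding node_at_def by simp
  then show ?thesis using that h(1,2) by blast
qed

lemma nodes_fin: "finite {K. is_node P A k K}"
proof -
  have "{K. is_node P A k K} \<subseteq> Pow P \<times> Pow P"
  proof
    fix K assume "K \<in> {K. is_node P A k K}"
    then obtain t p s where h: "t \<in> {2..k}" "consec P A t p s" "node_at p s K"
      using is_node_at by blast
    have "fst K \<subseteq> A p" "snd K \<subseteq> A s" using nd_sub[OF h(3)] by simp_all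
    moreover have "A p \<subseteq> P" "A s \<subseteq> P" using lev_sub goodpairD(1,2)[OF node_atD(1)[OF h(3)]] by simp_all
    ultimately show "K \<in> Pow P \<times> Pow P" by (cases K) auto
  qed
  then show ?thesis using finite_subset finP by blast
qed

definition gain :: "'a \<Rightarrow> 'a set \<times> 'a set \<Rightarrow> int" where
  "gain x N = int (card (up P {x} \<inter> snd N)) - int (card (up P {x} \<inter> fst N))"

context
  fixes Mn :: "'a set \<times> 'a set" and uu :: nat and ss :: enat
begin

definition Fs :: "('a set \<times> 'a set) set" where
  "Fs = {K. first_problematic P A k Mn K \<and> charac P K = (uu, ss)}"

definition SS :: "'a \<Rightarrow> 'a set \<times> 'a set \<Rightarrow> ('a set \<times> 'a set) set" where
  "SS x N = {K. K \<in> Fs \<and> K \<in> desc P A k N \<and> partial x K}"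

lemma Fs_node: assumes "K \<in> Fs" shows "is_node P A k K"
proof -
  have "first_problematic P A k Mn K" using assms unfolding Fs_def by simp
  then have "problematic P A k K" unfolding first_problematic_def by (elim conjE)
  then show ?thesis unfolding problematic_def by (elim conjE)
qed

lemma Fs_fin: "finite Fs"
proof -
  have "Fs \<subseteq> {K. is_node P A k K}" using Fs_node by blast
  then show ?thesis by (rule finite_subset[OF _ nodes_fin])
qed

lemma SS_fin: "finite (SS x N)"
proof -
  have "SS x N \<subseteq> Fs" unfolding SS_def by blast
  then show ?thesis by (rule finite_subset[OF _ Fs_fin])
qed

lemma SS_self:
  assumes NF: "N \<in> Fs" shows "SS x N \<subseteq> {N}"
proof
  fix K assume K: "K \<in> SS x N"
  show "K \<in> {N}"
  proof (rule ccontr)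
    assume nK: "K \<notin> {N}"
    have Kd: "K \<in> desc P A k N" and KF: "K \<in> Fs" using K unfolding SS_def by blast+
    have pa: "proper_anc P A k N K" using Kd nK unfolding desc_def by blast
    have KF1: "first_problematic P A k Mn K" and KF2: "charac P K = (uu, ss)"
      using KF unfolding Fs_def by blast+
    have nx: "\<not> (\<exists>K'. K' \<in> desc P A k Mn \<and> proper_anc P A k K' K \<and> problematic P A k K' \<and>
            charac P K' = charac P K)"
      using KF1 unfolding first_problematic_def by (elim conjE)
    have NF1: "first_problematic P A k Mn N" using NF unfolding Fs_def mem_Collect_eq by (rule conjunct1)
    have NF2: "charac P N = (uu, ss)" using NF unfolding Fs_def mem_Collect_eq by (rule conjunct2)
    have "N \<in> desc P A k Mn" using NF1 unfolding first_problematic_def by (rule conjunct1)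
    moreover have "problematic P A k N" using NF1 unfolding first_problematic_def by (elim conjE)
    moreover have "charac P N = charac P K" using NF2 KF2 by simp
    ultimately show False using nx pa by blast
  qed
qed

lemma SS_child:
  assumes K: "K \<in> SS x N" and ne: "K \<noteq> N"
  shows "\<exists>C. childof P A k C N \<and> K \<in> SS x C"
proof -
  have "K \<in> desc P A k N" using K unfolding SS_def by simp
  then have "K = N \<or> (\<exists>C. childof P A k C N \<and> K \<in> desc P A k C)" by (rule desc_cases)
  then obtain C where C: "childof P A k C N" "K \<in> desc P A k C" using ne by blast
  have "K \<in> Fs" "partial x K" using K unfolding SS_def by simp_all
  then have "K \<in> SS x C" unfolding SS_def using C(2) by simp
  then show ?thesis using C(1) by blast
qed

lemma count_main:
  assumes "t0 \<in> {2..k}" "consec P A t0 p s" "comp_node (A p) (A s) N"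
  shows "int (card (SS x N)) \<le> gain x N"
  using assms
proof (induction "card (ins p s)" arbitrary: t0 p s N rule: less_induct)
  case less
  have gps: "goodpair p s" using consec_good[OF less.prems(1,2)] .
  have NN: "node_at p s N" using gps less.prems(3) unfolding node_at_def by simp
  have gge: "(if partial x N then 1 else 0) \<le> gain x N"
    using nd_gain[OF NN, of x] unfolding gain_def by (simp split: if_splits)
  show ?case
  proof (cases "N \<in> Fs")
    case True
    have sub: "SS x N \<subseteq> {N}" using SS_self[OF True] .
    have "int (card (SS x N)) \<le> (if partial x N then 1 else 0)"
    proof (cases "partial x N")
      case True
      then show ?thesis using card_mono[OF _ sub] by simp
    next
      case False
      then have "SS x N = {}" using sub unfolding SS_def by blast
      then show ?thesis by simp
    qed
    then show ?thesis using gge by linarith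
  next
    case notF: False
    show ?thesis
    proof (cases "ins p s = {}")
      case True
      have "SS x N = {}"
      proof (rule ccontr)
        assume "SS x N \<noteq> {}"
        then obtain K where K: "K \<in> SS x N" by blast
        have "K \<noteq> N" using K notF unfolding SS_def by blast
        then obtain C where "childof P A k C N" using SS_child[OF K] by blast
        then show False using childof_inside[OF NN] True by blast
      qed
      then show ?thesis using gge by (simp split: if_splits)
    next
      case False
      define t where "t = Min (ins p s)"
      have tin: "t \<in> ins p s" unfolding t_def using Min_in[OF ins_fin False] .
      have tmin: "\<forall>q\<in>ins p s. t \<le> q" unfolding t_def using Min_le[OF ins_fin] by blast
      have t1: "t \<in> {1..k}" "sqlt P (A p) (A t)" "sqlt P (A t) (A s)" using tin unfolding ins_def by simp_all
      have pk: "p \<in> {1..k}" "s \<in> {1..k}" using goodpairD[OF gps] by simp_all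
      have c0: "p \<in> {1..t0}" "s \<in> {1..t0}" "\<not> (\<exists>q\<in>{1..t0}. sqlt P (A p) (A q) \<and> sqlt P (A q) (A s))"
        using less.prems(2) unfolding consec_def by blast+
      have tt0: "t0 < t"
      proof (rule ccontr)
        assume "\<not> t0 < t"
        then have "t \<in> {1..t0}" using t1(1) by simp
        then show False using c0(3) t1(2,3) by blast
      qed
      have t2: "t \<in> {2..k}" using tt0 less.prems(1) t1(1) by simp
      have ct1: "consec P A t p t"
        unfolding consec_def
      proof (intro conjI)
        show "p \<in> {1..t}" using c0(1) tt0 by simp
        show "t \<in> {1..t}" using t1(1) by simp
        show "sqlt P (A p) (A t)" using t1(2) .
        show "\<not> (\<exists>q\<in>{1..t}. sqlt P (A p) (A q) \<and> sqlt P (A q) (A t))"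
        proof
          assume "\<exists>q\<in>{1..t}. sqlt P (A p) (A q) \<and> sqlt P (A q) (A t)"
          then obtain q where q: "q \<in> {1..t}" "sqlt P (A p) (A q)" "sqlt P (A q) (A t)" by blast
          have qk: "q \<in> {1..k}" using q(1) t1(1) by simp
          have "sqlt P (A q) (A s)" using lev_sqlt_trans[OF qk t1(1) pk(2) q(3) t1(3)] .
          then have "q \<in> ins p s" unfolding ins_def using qk q(2) by simp
          then have "t \<le> q" using tmin by blast
          then have "q = t" using q(1) by simp
          then show False using q(3) sqltD(2) by blast
        qed
      qed
      have ct2: "consec P A t t s"
        unfolding consec_def
      proof (intro conjI)
        show "s \<in> {1..t}" using c0(2) tt0 by simp
        show "t \<in> {1..t}" using t1(1) by simp
        show "sqlt P (A t) (A s)" using t1(3) .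
        show "\<not> (\<exists>q\<in>{1..t}. sqlt P (A t) (A q) \<and> sqlt P (A q) (A s))"
        proof
          assume "\<exists>q\<in>{1..t}. sqlt P (A t) (A q) \<and> sqlt P (A q) (A s)"
          then obtain q where q: "q \<in> {1..t}" "sqlt P (A t) (A q)" "sqlt P (A q) (A s)" by blast
          have qk: "q \<in> {1..k}" using q(1) t1(1) by simp
          have "sqlt P (A p) (A q)" using lev_sqlt_trans[OF pk(1) t1(1) qk t1(2) q(2)] .
          then have "q \<in> ins p s" unfolding ins_def using qk q(3) by simp
          then have "t \<le> q" using tmin by blast
          then have "q = t" using q(1) by simp
          then show False using q(2) sqltD(2) by blast
        qed
      qed
      have g1: "goodpair p t" using consec_good[OF t2 ct1] .
      have g2: "goodpair t s" using consec_good[OF t2 ct2] .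
      have ntin1: "t \<notin> ins p t" unfolding ins_def using sqltD(2) by blast
      have ntin2: "t \<notin> ins t s" unfolding ins_def using sqltD(2) by blast
      have sub1: "ins p t \<subseteq> ins p s"
      proof
        fix q assume "q \<in> ins p t"
        then have q: "q \<in> {1..k}" "sqlt P (A p) (A q)" "sqlt P (A q) (A t)" unfolding ins_def by simp_all
        have "sqlt P (A q) (A s)" using lev_sqlt_trans[OF q(1) t1(1) pk(2) q(3) t1(3)] .
        then show "q \<in> ins p s" unfolding ins_def using q by simp
      qed
      have sub2: "ins t s \<subseteq> ins p s"
      proof
        fix q assume "q \<in> ins t s"
        then have q: "q \<in> {1..k}" "sqlt P (A t) (A q)" "sqlt P (A q) (A s)" unfolding ins_def by simp_all
        have "sqlt P (A p) (A q)" using lev_sqlt_trans[OF pk(1) t1(1) q(1) t1(2) q(2)] .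
        then show "q \<in> ins p s" unfolding ins_def using q by simp
      qed
      have lt1: "card (ins p t) < card (ins p s)"
        using psubset_card_mono[OF ins_fin] sub1 ntin1 tin by blast
      have lt2: "card (ins t s) < card (ins p s)"
        using psubset_card_mono[OF ins_fin] sub2 ntin2 tin by blast
      have IH1: "int (card (SS x C)) \<le> gain x C" if C: "C \<in> Lo p t N" for C
      proof -
        have "comp_node (A p) (A t) C" using C unfolding Lo_def by simp
        then show ?thesis using less.hyps[OF lt1 t2 ct1] by blast
      qed
      have IH2: "int (card (SS x C)) \<le> gain x C" if C: "C \<in> Up t s N" for C
      proof -
        have "comp_node (A t) (A s) C" using C unfolding Up_def by simp
        then show ?thesis using less.hyps[OF lt2 t2 ct2] by blast
      qed
      define Ch where "Ch = Lo p t N \<union> Up t s N"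
      have finCh: "finite Ch" unfolding Ch_def using Lo_fin[OF NN g1 g2] Up_fin[OF NN g1 g2] by simp
      have chsub: "SS x N \<subseteq> (\<Union>C\<in>Ch. SS x C)"
      proof
        fix K assume K: "K \<in> SS x N"
        have "K \<noteq> N" using K notF unfolding SS_def by blast
        then obtain C where C: "childof P A k C N" "K \<in> SS x C" using SS_child[OF K] by blast
        obtain t' where t': "t' \<in> ins p s" "\<forall>q\<in>{1..t' - 1}. \<not> (sqlt P (A p) (A q) \<and> sqlt P (A q) (A s))"
          "comp_node (A p) (A t') C \<or> comp_node (A t') (A s) C" "Int_node P C \<subset> Int_node P N"
          using childof_inside[OF NN C(1)] by blast
        have "t \<le> t'" using tmin t'(1) by blast
        moreover have "\<not> t < t'"
        proof
          assume "t < t'"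
          then have "t \<in> {1..t' - 1}" using t1(1) by simp
          then show False using t'(2) t1(2,3) by blast
        qed
        ultimately have tt': "t' = t" by simp
        have "C \<in> Ch" using t'(3) unfolding tt'
        proof
          assume cn: "comp_node (A p) (A t) C"
          then have NC: "node_at p t C" using g1 unfolding node_at_def by simp
          have "fst C \<subseteq> fst N"
          proof
            fix z assume z: "z \<in> fst C"
            then have "z \<in> Int_node P N" using nd_Int(1)[OF NC] t'(4) by blast
            then obtain x' where x': "x' \<in> fst N" "x' \<le> z" unfolding Int_node_def up_def by blast
            have "x' \<in> A p" "z \<in> A p" using x'(1) z nd_sub(1)[OF NN] nd_sub(1)[OF NC] by blast+
            then have "x' = z" using lev_anti[OF pk(1)] x'(2) unfolding antichain_def by blast
            then show "z \<in> fst N" using x'(1) by simp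
          qed
          then show "C \<in> Ch" unfolding Ch_def Lo_def using cn by blast
        next
          assume cn: "comp_node (A t) (A s) C"
          then have NC: "node_at t s C" using g2 unfolding node_at_def by simp
          have "snd C \<subseteq> snd N"
          proof
            fix z assume z: "z \<in> snd C"
            then have "z \<in> Int_node P N" using nd_Int(2)[OF NC] t'(4) by blast
            then obtain y' where y': "y' \<in> snd N" "z \<le> y'" unfolding Int_node_def down_def by blast
            have "y' \<in> A s" "z \<in> A s" using y'(1) z nd_sub(2)[OF NN] nd_sub(2)[OF NC] by blast+
            then have "z = y'" using lev_anti[OF pk(2)] y'(2) unfolding antichain_def by blast
            then show "z \<in> snd N" using y'(1) by simp
          qed
          then show "C \<in> Ch" unfolding Ch_def Up_def using cn by blast
        qed
        then show "K \<in> (\<Union>C\<in>Ch. SS x C)" using C(2) by blast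
      qed
      have finU: "finite (\<Union>C\<in>Ch. SS x C)" using finCh SS_fin by simp
      have "card (SS x N) \<le> card (\<Union>C\<in>Ch. SS x C)"
        by (rule card_mono[OF finU chsub])
      also have "\<dots> \<le> (\<Sum>C\<in>Ch. card (SS x C))" using card_UN_le[OF finCh] .
      finally have c0: "card (SS x N) \<le> (\<Sum>C\<in>Ch. card (SS x C))" .
      have c1: "int (card (SS x N)) \<le> (\<Sum>C\<in>Ch. int (card (SS x C)))"
        using c0 by (simp only: of_nat_sum[symmetric] of_nat_le_iff)
      have c2: "(\<Sum>C\<in>Ch. int (card (SS x C))) \<le> (\<Sum>C\<in>Ch. gain x C)"
        by (rule sum_mono) (use IH1 IH2 in \<open>auto simp: Ch_def\<close>)
      define T where "T = up P {x}"
      have djLo: "\<forall>C\<in>Lo p t N. \<forall>C'\<in>Lo p t N. C \<noteq> C' \<longrightarrow> fst C \<inter> fst C' = {}"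
        "\<forall>C\<in>Lo p t N. \<forall>C'\<in>Lo p t N. C \<noteq> C' \<longrightarrow> snd C \<inter> snd C' = {}"
        using nodes_disj[OF Lo_node[OF g1] Lo_node[OF g1]] by auto
      have djUp: "\<forall>C\<in>Up t s N. \<forall>C'\<in>Up t s N. C \<noteq> C' \<longrightarrow> fst C \<inter> fst C' = {}"
        "\<forall>C\<in>Up t s N. \<forall>C'\<in>Up t s N. C \<noteq> C' \<longrightarrow> snd C \<inter> snd C' = {}"
        using nodes_disj[OF Up_node[OF g2] Up_node[OF g2]] by auto
      have fLo: "\<forall>C\<in>Lo p t N. finite (fst C)" "\<forall>C\<in>Lo p t N. finite (snd C)"
        using nd_fin[OF Lo_node[OF g1]] by auto
      have fUp: "\<forall>C\<in>Up t s N. finite (fst C)" "\<forall>C\<in>Up t s N. finite (snd C)"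
        using nd_fin[OF Up_node[OF g2]] by auto
      have sLo1: "(\<Sum>C\<in>Lo p t N. card (T \<inter> fst C)) = card (T \<inter> fst N)"
        using sum_card_UN[OF Lo_fin[OF NN g1 g2] fLo(1) djLo(1)] U1[OF NN g1 g2] by simp
      have sLo2: "(\<Sum>C\<in>Lo p t N. card (T \<inter> snd C)) = card (T \<inter> Zs t N)"
        using sum_card_UN[OF Lo_fin[OF NN g1 g2] fLo(2) djLo(2)] U2[OF NN g1 g2] by simp
      have sUp1: "(\<Sum>C\<in>Up t s N. card (T \<inter> fst C)) = card (T \<inter> Zs t N)"
        using sum_card_UN[OF Up_fin[OF NN g1 g2] fUp(1) djUp(1)] U3[OF NN g1 g2] by simp
      have sUp2: "(\<Sum>C\<in>Up t s N. card (T \<inter> snd C)) = card (T \<inter> snd N)"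
        using sum_card_UN[OF Up_fin[OF NN g1 g2] fUp(2) djUp(2)] U4[OF NN g1 g2] by simp
      have gLo: "(\<Sum>C\<in>Lo p t N. gain x C) = int (card (T \<inter> Zs t N)) - int (card (T \<inter> fst N))"
        unfolding gain_def T_def[symmetric] sum_subtractf
        by (simp only: of_nat_sum[symmetric] sLo1 sLo2)
      have gUp: "(\<Sum>C\<in>Up t s N. gain x C) = int (card (T \<inter> snd N)) - int (card (T \<inter> Zs t N))"
        unfolding gain_def T_def[symmetric] sum_subtractf
        by (simp only: of_nat_sum[symmetric] sUp1 sUp2)
      have "(\<Sum>C\<in>Ch. gain x C) = (\<Sum>C\<in>Lo p t N. gain x C) + (\<Sum>C\<in>Up t s N. gain x C)"
        unfolding Ch_def
        by (rule sum.union_disjoint[OF Lo_fin[OF NN g1 g2] Up_fin[OF NN g1 g2] LoUp_disj[OF NN g1 g2]])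
      also have "\<dots> = gain x N" unfolding gLo gUp by (simp add: gain_def T_def)
      finally show ?thesis using c1 c2 by linarith
    qed
  qed
qed


lemma ceil_le_floor1: "nat \<lceil>r::real\<rceil> \<le> nat \<lfloor>r\<rfloor> + 1"
proof -
  have "\<lceil>r\<rceil> \<le> \<lfloor>r\<rfloor> + 1" by linarith
  then show ?thesis by linarith
qed

lemma Fs_partial:
  assumes probM: "problematic P A k Mn" and K: "K \<in> Fs"
  shows "\<exists>x\<in>fst Mn. partial x K"
proof (rule ccontr)
  assume np: "\<not> (\<exists>x\<in>fst Mn. partial x K)"
  have isM: "is_node P A k Mn" using probM unfolding problematic_def by (elim conjE)
  obtain tM a b where M: "tM \<in> {2..k}" "consec P A tM a b" "node_at a b Mn"
    using is_node_at[OF isM] by blast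
  obtain tK p s where KK: "tK \<in> {2..k}" "consec P A tK p s" "node_at p s K"
    using is_node_at[OF Fs_node[OF K]] by blast
  have gab: "goodpair a b" using node_atD(1)[OF M(3)] .
  have gps: "goodpair p s" using node_atD(1)[OF KK(3)] .
  have ak: "a \<in> {1..k}" "b \<in> {1..k}" using goodpairD[OF gab] by simp_all
  have pk: "p \<in> {1..k}" "s \<in> {1..k}" using goodpairD[OF gps] by simp_all
  have KF1: "first_problematic P A k Mn K" using K unfolding Fs_def mem_Collect_eq by (rule conjunct1)
  have Kd: "K \<in> desc P A k Mn" using KF1 unfolding first_problematic_def by (rule conjunct1)
  have probK: "problematic P A k K" using KF1 unfolding first_problematic_def by (elim conjE)
  have IntKM: "Int_node P K \<subseteq> Int_node P Mn" using desc_Int[OF Kd] .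
  have fK: "fst K \<subseteq> Int_node P Mn" "snd K \<subseteq> Int_node P Mn" using nd_Int[OF KK(3)] IntKM by blast+
  have sK: "fst K \<subseteq> A p" "snd K \<subseteq> A s" using nd_sub[OF KK(3)] by simp_all
  have sM: "fst Mn \<subseteq> A a" "snd Mn \<subseteq> A b" using nd_sub[OF M(3)] by simp_all
  obtain z0 where z0: "z0 \<in> fst K" using nd_ne(1)[OF KK(3)] by blast
  obtain x0 where x0: "x0 \<in> fst Mn" "x0 \<le> z0" using fK(1) z0 unfolding Int_node_def up_def by blast
  have sq1: "sqle P (A a) (A p)" using lev_le_sqle[OF ak(1) pk(1) _ _ x0(2)] x0(1) z0 sM sK by blast
  obtain \<phi> where \<phi>: "perfect_matching (A p) (A s) \<phi>" using nd_pm_ex[OF KK(3)] by blast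
  have b\<phi>: "bij_betw \<phi> (A p) (A s)" and l\<phi>: "\<forall>x\<in>A p. x < \<phi> x"
    using \<phi> unfolding perfect_matching_def by simp_all
  have "\<phi> z0 \<in> snd K" using nd_pm[OF KK(3) \<phi>] z0 bij_betwE by blast
  then obtain y0 where y0: "y0 \<in> snd Mn" "\<phi> z0 \<le> y0" using fK(2) unfolding Int_node_def down_def by blast
  have sq2: "sqle P (A s) (A b)" using lev_le_sqle[OF pk(2) ak(2) _ _ y0(2)] \<open>\<phi> z0 \<in> snd K\<close> y0(1) sM sK by blast
  obtain g where g: "bij_betw g (A a) (A p)" "\<forall>z\<in>A a. z \<le> g z" using match[OF ak(1) pk(1) sq1] by blast
  obtain h where h: "bij_betw h (A s) (A b)" "\<forall>z\<in>A s. z \<le> h z" using match[OF pk(2) ak(2) sq2] by blast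
  define f where "f = h \<circ> (\<phi> \<circ> g)"
  have bf: "bij_betw f (A a) (A b)" unfolding f_def using bij_betw_trans[OF bij_betw_trans[OF g(1) b\<phi>] h(1)] .
  have ltf: "\<forall>x\<in>A a. x < f x"
  proof
    fix x assume x: "x \<in> A a"
    have gx: "g x \<in> A p" using g(1) x bij_betwE by blast
    have pgx: "\<phi> (g x) \<in> A s" using b\<phi> gx bij_betwE by blast
    have "x \<le> g x" using g(2) x by blast
    also have "g x < \<phi> (g x)" using l\<phi> gx by blast
    also have "\<phi> (g x) \<le> h (\<phi> (g x))" using h(2) pgx by blast
    finally show "x < f x" unfolding f_def by simp
  qed
  have pmab: "perfect_matching (A a) (A b) f" unfolding perfect_matching_def using bf ltf by blast
  have bfM: "bij_betw f (fst Mn) (snd Mn)" using nd_pm[OF M(3) pmab] .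
  define G where "G = {x \<in> A a. g x \<in> fst K}"
  have bG: "bij_betw g G (fst K)"
  proof -
    have GA: "G \<subseteq> A a" unfolding G_def by blast
    have "inj_on g G" using inj_on_subset[OF bij_betw_imp_inj_on[OF g(1)] GA] .
    moreover have "g ` G = fst K"
    proof
      show "g ` G \<subseteq> fst K" unfolding G_def by blast
      show "fst K \<subseteq> g ` G"
      proof
        fix z assume z: "z \<in> fst K"
        then have "z \<in> A p" using sK by blast
        moreover have "g ` A a = A p" using g(1) by (simp add: bij_betw_def)
        ultimately obtain x where "x \<in> A a" "z = g x" by (metis imageE)
        then show "z \<in> g ` G" unfolding G_def using z by blast
      qed
    qed
    ultimately show ?thesis unfolding bij_betw_def by blast
  qed
  have cardG: "card G = card (fst K)" using bij_betw_same_card[OF bG] .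
  have GA: "G \<subseteq> A a" unfolding G_def by blast
  have finG: "finite G" using finite_subset[OF GA lev_fin[OF ak(1)]] .
  have GM: "G \<subseteq> fst Mn"
  proof
    fix x assume x: "x \<in> G"
    then have xa: "x \<in> A a" and gxK: "g x \<in> fst K" unfolding G_def by simp_all
    obtain y where y: "y \<in> snd Mn" "g x \<le> y" using fK(1) gxK unfolding Int_node_def down_def by blast
    have "x \<le> g x" using g(2) xa by blast
    then have xy: "x \<le> y" using y(2) by simp
    have "x \<noteq> y" using xa y(1) sM gp_disj[OF gab] by blast
    then have "x < y" using xy by simp
    then show "x \<in> fst Mn" using nd_closed2[OF M(3) y(1) xa] by blast
  qed
  have allup: "fst K \<subseteq> up P {x}" if x: "x \<in> G" for x
  proof -
    have xM: "x \<in> fst Mn" using GM x by blast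
    then have "\<not> partial x K" using np by blast
    then have d: "up P {x} \<inter> fst K = {} \<or> fst K \<subseteq> up P {x}" unfolding partial_def by blast
    have xa: "x \<in> A a" and gxK: "g x \<in> fst K" using x unfolding G_def by simp_all
    have "g x \<in> P" using gxK sK lev_sub[OF pk(1)] by blast
    moreover have "x \<le> g x" using g(2) xa by blast
    ultimately have "g x \<in> up P {x}" unfolding up_def by blast
    then show ?thesis using d gxK by blast
  qed
  have clq: "x1 < f x2" if x1: "x1 \<in> G" and x2: "x2 \<in> G" for x1 x2
  proof -
    have gx2: "g x2 \<in> fst K" "x2 \<in> A a" using x2 unfolding G_def by simp_all
    have "g x2 \<in> up P {x1}" using allup[OF x1] gx2(1) by blast
    then have "x1 \<le> g x2" unfolding up_def by blast
    have gp: "g x2 \<in> A p" using gx2(1) sK by blast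
    have pgx: "\<phi> (g x2) \<in> A s" using b\<phi> gp bij_betwE by blast
    note \<open>x1 \<le> g x2\<close>
    also have "g x2 < \<phi> (g x2)" using l\<phi> gp by blast
    also have "\<phi> (g x2) \<le> h (\<phi> (g x2))" using h(2) pgx by blast
    finally show "x1 < f x2" unfolding f_def by simp
  qed
  define c where "c = nat \<lceil>sqrt (real (width P))\<rceil>"
  have "node_width K \<ge> nat \<lfloor>sqrt (real (width P))\<rfloor> + 1" using probK unfolding problematic_def by (elim conjE)
  then have cle: "c \<le> card G" unfolding c_def cardG node_width_def using ceil_le_floor1 le_trans by blast
  obtain S where S: "S \<subseteq> G" "card S = c" "finite S" using obtain_subset_with_card_n[OF cle] by blast
  obtain xs where xs: "bij_betw xs {0..<card S} S" using ex_bij_betw_nat_finite[OF S(3)] by blast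
  have xs1: "inj_on xs {..<c}" using xs S(2) unfolding bij_betw_def atLeast0LessThan by simp
  have xs2: "xs ` {..<c} \<subseteq> G" using xs S(1,2) unfolding bij_betw_def atLeast0LessThan by simp
  define ys where "ys = (\<lambda>i. f (xs i))"
  have injf: "inj_on f (fst Mn)" using bij_betw_imp_inj_on[OF bfM] .
  have "inj_on (f \<circ> xs) {..<c}"
    using comp_inj_on[OF xs1 inj_on_subset[OF injf]] xs2 GM by blast
  then have ys1: "inj_on ys {..<c}" unfolding ys_def comp_def .
  have mem: "\<forall>i<c. xs i \<in> fst Mn \<and> ys i \<in> snd Mn"
  proof (intro allI impI)
    fix i assume "i < c"
    then have "xs i \<in> fst Mn" using xs2 GM by blast
    then show "xs i \<in> fst Mn \<and> ys i \<in> snd Mn" unfolding ys_def using bfM bij_betwE by blast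
  qed
  have cl: "\<forall>i<c. \<forall>j<c. xs i < ys j"
  proof (intro allI impI)
    fix i j assume "i < c" "j < c"
    then have "xs i \<in> G" "xs j \<in> G" using xs2 by blast+
    then show "xs i < ys j" unfolding ys_def using clq by blast
  qed
  have pmM: "perfect_matching (fst Mn) (snd Mn) f"
    unfolding perfect_matching_def using bfM ltf sM by blast
  have "has_dilworth_clique Mn c"
    unfolding has_dilworth_clique_def
    using xs1 ys1 mem cl pmM unfolding ys_def by blast
  moreover have "\<not> has_dilworth_clique Mn (nat \<lceil>sqrt (real (width P))\<rceil>)"
    using probM unfolding problematic_def by (elim conjE)
  ultimately show False unfolding c_def by blast
qed

lemma final_count:
  assumes probM: "problematic P A k Mn"
  shows "card Fs \<le> card (fst Mn) * (card (fst Mn) - 1)"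
proof -
  have isM: "is_node P A k Mn" using probM unfolding problematic_def by (elim conjE)
  obtain tM a b where M: "tM \<in> {2..k}" "consec P A tM a b" "node_at a b Mn"
    using is_node_at[OF isM] by blast
  have sM: "fst Mn \<subseteq> A a" using nd_sub[OF M(3)] by simp
  have aP: "A a \<subseteq> P" using lev_sub goodpairD(1)[OF node_atD(1)[OF M(3)]] by blast
  have finM: "finite (fst Mn)" "finite (snd Mn)" using nd_fin[OF M(3)] by simp_all
  have bnd: "card (SS x Mn) \<le> card (fst Mn) - 1" if x: "x \<in> fst Mn" for x
  proof -
    have c1: "int (card (SS x Mn)) \<le> gain x Mn" using count_main[OF M(1,2) node_atD(2)[OF M(3)]] .
    have "card (up P {x} \<inter> snd Mn) \<le> card (snd Mn)" using card_mono[OF finM(2)] by blast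
    then have c2: "card (up P {x} \<inter> snd Mn) \<le> card (fst Mn)" using nd_card[OF M(3)] by simp
    have "x \<in> up P {x} \<inter> fst Mn" using x sM aP unfolding up_def by blast
    moreover have "finite (up P {x} \<inter> fst Mn)" using finM(1) by simp
    ultimately have "0 < card (up P {x} \<inter> fst Mn)" by (auto simp: card_gt_0_iff)
    then have c3: "1 \<le> card (up P {x} \<inter> fst Mn)" by simp
    show ?thesis using c1 c2 c3 unfolding gain_def by linarith
  qed
  have sub: "Fs \<subseteq> (\<Union>x\<in>fst Mn. SS x Mn)"
  proof
    fix K assume K: "K \<in> Fs"
    obtain x where x: "x \<in> fst Mn" "partial x K" using Fs_partial[OF probM K] by blast
    have KF1: "first_problematic P A k Mn K" using K unfolding Fs_def mem_Collect_eq by (rule conjunct1)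
    have Kd: "K \<in> desc P A k Mn" using KF1 unfolding first_problematic_def by (rule conjunct1)
    have "K \<in> SS x Mn" unfolding SS_def using K Kd x(2) by blast
    then show "K \<in> (\<Union>x\<in>fst Mn. SS x Mn)" using x(1) by blast
  qed
  have finU: "finite (\<Union>x\<in>fst Mn. SS x Mn)" using finM(1) SS_fin by simp
  have "card Fs \<le> card (\<Union>x\<in>fst Mn. SS x Mn)" by (rule card_mono[OF finU sub])
  also have "\<dots> \<le> (\<Sum>x\<in>fst Mn. card (SS x Mn))" by (rule card_UN_le[OF finM(1)])
  also have "\<dots> \<le> card (fst Mn) * (card (fst Mn) - 1)"
    using sum_bounded_above[of "fst Mn" "\<lambda>x. card (SS x Mn)" "card (fst Mn) - 1"] bnd by simp
  finally show ?thesis .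
qed

end

end

theorem lemma20:
  fixes P :: "'a::order set" and A :: "nat \<Rightarrow> 'a set" and k :: nat
    and N M :: "'a set \<times> 'a set"
    and u u' u'' :: nat and s s' s'' :: enat
  assumes "regular_poset P A k"
    and "active P A k N" and "charac P N = (u, s)"
    and "problematic P A k M"
    and "\<exists>N0 \<in> Qset P A k N. childof P A k M N0"
    and "charac P M = (u', s')"
  shows "card {K. first_problematic P A k M K \<and> charac P K = (u'', s'')} \<le> u'^2
         \<and> u'^2 \<le> (width P)^2"
proof -
  interpret R: RP P A k by (rule RP.intro[OF assms(1)])
  have fc: "card (R.Fs M u'' s'') \<le> card (fst M) * (card (fst M) - 1)"
    using R.final_count[OF assms(4)] .
  have eq: "{K. first_problematic P A k M K \<and> charac P K = (u'', s'')} = R.Fs M u'' s''"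
    unfolding R.Fs_def ..
  have u': "u' = card (fst M)" using assms(6) unfolding charac_def node_width_def by simp
  have isM: "is_node P A k M" using assms(4) unfolding problematic_def by (elim conjE)
  obtain tM a b where M: "tM \<in> {2..k}" "consec P A tM a b" "R.node_at a b M"
    using R.is_node_at[OF isM] by blast
  have ak: "a \<in> {1..k}" using R.goodpairD(1)[OF R.node_atD(1)[OF M(3)]] .
  have "card (fst M) \<le> card (A a)"
    using card_mono[OF R.lev_fin[OF ak] R.nd_sub(1)[OF M(3)]] .
  then have uw: "u' \<le> width P" using R.lev_card[OF ak] u' by simp
  have "u' * (u' - 1) \<le> u' ^ 2" by (simp add: power2_eq_square)
  then have c1: "card {K. first_problematic P A k M K \<and> charac P K = (u'', s'')} \<le> u'^2"
    using fc eq u' by simp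
  have c2: "u'^2 \<le> (width P)^2" using uw by (simp add: power_mono)
  show ?thesis using c1 c2 by simp
qed

end
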